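(* Let $\mathbb M$ be a sequential Morse matching on a finite-type based chain complex $(\mathbf C,I)$ of real inner product spaces, with associated maps $\Phi=\Phi^{\mathbb M}:\mathbf C^{\mathbb M}\to\mathbf C$, $\Psi=\Psi^{\mathbb M}:\mathbf C\to\mathbf C^{\mathbb M}$, and fix $n$. Then the conditions (1) $\mathrm{Proj}_{\operatorname{Ker}\partial_{n+1}^\dagger}(\Phi\Psi s-s)=0$ for all $s\in\mathbf C_n$, and (2) $\mathrm{Proj}_{\operatorname{Ker}\partial_{n-1}}(\Psi^\dagger\Phi^\dagger s-s)=0$ for all $s\in\mathbf C_{n-1}$ hold if and only if $\mathbb M$ is $(n,n-1)$-free.
   Context: Based chain complex: chain complex $(\mathbf C,\partial)$ of finite-dimensional real inner product spaces $\mathbf C_n$, $n\ge0$, with disjoint finite index sets $I_n$ and $\mathbf C_n=\bigoplus_{\alpha\in I_n}C_\alpha$ (summands not necessarily orthogonal); $\partial_{\beta,\alpha}=\pi_\beta\partial_n i_\alpha$. $\dagger$ is the adjoint (restricted inner products on subcomplexes), $\mathrm{Proj}_W$ orthogonal projection. Graph: edges $\alpha\to\beta$ when $\partial_{\beta,\alpha}\ne0$. Morse matching: edge set $M$ with each cell on at most one edge, $\partial_{\beta,\alpha}$ an isomorphism for $\alpha\to\beta\in M$, and "directed path from $\alpha$ to $\beta$ in the graph with $M$ reversed" a partial order on each $I_n$; $M^0$ = unmatched cells. With $\Gamma_{\beta,\alpha}$ the sum over directed paths from $\alpha$ to $\beta$ in the reversed graph of composites of $\partial_{\sigma_{i+1},\sigma_i}$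 (ordinary steps) and $-\partial_{\sigma_i,\sigma_{i+1}}^{-1}$ (reversed matched edges), the Morse complex is $\mathbf C^M_n=\bigoplus_{\alpha\in I_n\cap M^0}C_\alpha$ with boundary $\sum_{\beta\in M^0\cap I_{n-1}}\Gamma_{\beta,\alpha}$, and the Morse retraction is $\Phi^M=\sum_{\beta\in I_n}\Gamma_{\beta,\alpha}$ on critical $C_\alpha$, $\Psi^M=\sum_{\beta\in M^0\cap I_n}\Gamma_{\beta,\alpha}$ on $C_\alpha$. A sequential Morse matching $\mathbb M=(M_{(1)},\dots,M_{(k)})$: $M_{(1)}$ a Morse matching on $(\mathbf C,I)$, $M_{(j+1)}$ a Morse matching on the based complex $\mathbf C^{M_{(j)}}$; $\mathbf C^{\mathbb M}=\mathbf C^{M_{(k)}}$, $\Phi^{\mathbb M}=\Phi^{M_{(1)}}\circ\cdots\circ\Phi^{M_{(k)}}$, $\Psi^{\mathbb M}=\Psi^{M_{(k)}}\circ\cdots\circ\Psi^{M_{(1)}}$. $\mathbb M$ is $(n,n-1)$-free if no $M_{(j)}$ pairs an $n$-cell with an $(n-1)$-cell. *)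

theory Defs
  imports "HOL-Analysis.Analysis"
begin

text \<open>A based chain complex is represented inside one ambient real inner product space 'v.
  Degrees are integers (I n is empty for n < 0, so C n = 0 for n < 0).
  idx n is the index set I_n, cell a is the summand C_a (a subspace of 'v),
  and bd n is the boundary map from C_n to C_(n-1) (only its values on C_n matter).
  Inner products on all chain spaces are restrictions of the ambient inner product.\<close>

record ('a, 'v) bcx =
  idx  :: "int \<Rightarrow> 'a set"
  cell :: "'a \<Rightarrow> 'v set"
  bd   :: "int \<Rightarrow> 'v \<Rightarrow> 'v"

definition chsp :: "('a, 'v::real_vector) bcx \<Rightarrow> int \<Rightarrow> 'v set" where
  "chsp X n = {(\<Sum>a\<in>idx X n. f a) | f. \<forall>a\<in>idx X n. f a \<in> cell X a}"

text \<open>Component pi_b of a chain in C_n with respect to the (direct, not necessarily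
  orthogonal) decomposition C_n = sum of the C_a, a in I_n.\<close>
definition comp :: "('a, 'v::real_vector) bcx \<Rightarrow> int \<Rightarrow> 'a \<Rightarrow> 'v \<Rightarrow> 'v" where
  "comp X n b s = (THE f. (\<forall>a\<in>idx X n. f a \<in> cell X a) \<and> (\<forall>a. a \<notin> idx X n \<longrightarrow> f a = 0)
                        \<and> s = (\<Sum>a\<in>idx X n. f a)) b"

definition based_complex :: "('a, 'v::real_inner) bcx \<Rightarrow> bool" where
  "based_complex X \<longleftrightarrow>
     (\<forall>n. finite (idx X n)) \<and>
     (\<forall>n<0. idx X n = {}) \<and>
     (\<forall>n m. n \<noteq> m \<longrightarrow> idx X n \<inter> idx X m = {}) \<and>
     (\<forall>n. \<forall>a\<in>idx X n. \<exists>B. finite B \<and> cell X a = span B) \<and>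
     (\<forall>n f. (\<forall>a\<in>idx X n. f a \<in> cell X a) \<and> (\<Sum>a\<in>idx X n. f a) = 0
              \<longrightarrow> (\<forall>a\<in>idx X n. f a = 0)) \<and>
     (\<forall>n. \<forall>x\<in>chsp X n. \<forall>y\<in>chsp X n. bd X n (x + y) = bd X n x + bd X n y) \<and>
     (\<forall>n. \<forall>x\<in>chsp X n. \<forall>c. bd X n (c *\<^sub>R x) = c *\<^sub>R bd X n x) \<and>
     (\<forall>n. \<forall>x\<in>chsp X n. bd X n x \<in> chsp X (n - 1)) \<and>
     (\<forall>n. \<forall>x\<in>chsp X n. bd X (n - 1) (bd X n x) = 0)"

definition deg :: "('a, 'v) bcx \<Rightarrow> 'a \<Rightarrow> int" where
  "deg X a = (THE n. a \<in> idx X n)"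

definition dent :: "('a, 'v::real_vector) bcx \<Rightarrow> 'a \<Rightarrow> 'a \<Rightarrow> 'v \<Rightarrow> 'v" where
  "dent X b a x = comp X (deg X a - 1) b (bd X (deg X a) x)"

definition edge :: "('a, 'v::real_vector) bcx \<Rightarrow> 'a \<Rightarrow> 'a \<Rightarrow> bool" where
  "edge X a b \<longleftrightarrow> (\<exists>n. a \<in> idx X n \<and> b \<in> idx X (n - 1) \<and> (\<exists>x\<in>cell X a. dent X b a x \<noteq> 0))"

text \<open>The graph with the edges of M reversed (a pair (a,b) in M stands for the edge a -> b).\<close>
definition rgraph :: "('a, 'v::real_vector) bcx \<Rightarrow> ('a \<times> 'a) set \<Rightarrow> ('a \<times> 'a) set" where
  "rgraph X M = {(a, b). edge X a b \<and> (a, b) \<notin> M} \<union> {(b, a). (a, b) \<in> M}"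

definition morse_matching :: "('a, 'v::real_inner) bcx \<Rightarrow> ('a \<times> 'a) set \<Rightarrow> bool" where
  "morse_matching X M \<longleftrightarrow>
     (\<forall>(a, b)\<in>M. edge X a b) \<and>
     (\<forall>e1\<in>M. \<forall>e2\<in>M. e1 \<noteq> e2 \<longrightarrow> {fst e1, snd e1} \<inter> {fst e2, snd e2} = {}) \<and>
     (\<forall>(a, b)\<in>M. bij_betw (dent X b a) (cell X a) (cell X b)) \<and>
     (\<forall>n. partial_order_on (idx X n) (Restr ((rgraph X M)\<^sup>*) (idx X n)))"

definition crit :: "('a \<times> 'a) set \<Rightarrow> 'a set" where
  "crit M = {a. \<forall>b. (a, b) \<notin> M \<and> (b, a) \<notin> M}"

definition stepmap :: "('a, 'v::real_vector) bcx \<Rightarrow> ('a \<times> 'a) set \<Rightarrow> 'a \<Rightarrow> 'a \<Rightarrow> 'v \<Rightarrow> 'v" where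
  "stepmap X M s t = (if (t, s) \<in> M then (\<lambda>x. - inv_into (cell X t) (dent X s t) x)
                      else dent X t s)"

fun pathmap :: "('a, 'v::real_vector) bcx \<Rightarrow> ('a \<times> 'a) set \<Rightarrow> 'a list \<Rightarrow> 'v \<Rightarrow> 'v" where
  "pathmap X M (s # t # p) = pathmap X M (t # p) \<circ> stepmap X M s t"
| "pathmap X M p = id"

definition paths :: "('a, 'v::real_vector) bcx \<Rightarrow> ('a \<times> 'a) set \<Rightarrow> 'a \<Rightarrow> 'a \<Rightarrow> 'a list set" where
  "paths X M a b = {p. p \<noteq> [] \<and> hd p = a \<and> last p = b \<and>
                       (\<forall>i. Suc i < length p \<longrightarrow> (p ! i, p ! Suc i) \<in> rgraph X M)}"

definition Gamma :: "('a, 'v::real_vector) bcx \<Rightarrow> ('a \<times> 'a) set \<Rightarrow> 'a \<Rightarrow> 'a \<Rightarrow> 'v \<Rightarrow> 'v" where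
  "Gamma X M b a x = (\<Sum>p\<in>paths X M a b. pathmap X M p x)"

definition mcx :: "('a, 'v::real_vector) bcx \<Rightarrow> ('a \<times> 'a) set \<Rightarrow> ('a, 'v) bcx" where
  "mcx X M = \<lparr> idx = (\<lambda>n. idx X n \<inter> crit M), cell = cell X,
              bd = (\<lambda>n x. \<Sum>a\<in>idx X n \<inter> crit M. \<Sum>b\<in>idx X (n - 1) \<inter> crit M.
                                Gamma X M b a (comp X n a x)) \<rparr>"

definition Phi :: "('a, 'v::real_vector) bcx \<Rightarrow> ('a \<times> 'a) set \<Rightarrow> int \<Rightarrow> 'v \<Rightarrow> 'v" where
  "Phi X M n x = (\<Sum>a\<in>idx X n \<inter> crit M. \<Sum>b\<in>idx X n. Gamma X M b a (comp X n a x))"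

definition Psi :: "('a, 'v::real_vector) bcx \<Rightarrow> ('a \<times> 'a) set \<Rightarrow> int \<Rightarrow> 'v \<Rightarrow> 'v" where
  "Psi X M n x = (\<Sum>a\<in>idx X n. \<Sum>b\<in>idx X n \<inter> crit M. Gamma X M b a (comp X n a x))"

fun seq_morse :: "('a, 'v::real_inner) bcx \<Rightarrow> ('a \<times> 'a) set list \<Rightarrow> bool" where
  "seq_morse X [] = True"
| "seq_morse X (M # Ms) = (morse_matching X M \<and> seq_morse (mcx X M) Ms)"

fun seq_cx :: "('a, 'v::real_vector) bcx \<Rightarrow> ('a \<times> 'a) set list \<Rightarrow> ('a, 'v) bcx" where
  "seq_cx X [] = X"
| "seq_cx X (M # Ms) = seq_cx (mcx X M) Ms"

fun seq_Phi :: "('a, 'v::real_vector) bcx \<Rightarrow> ('a \<times> 'a) set list \<Rightarrow> int \<Rightarrow> 'v \<Rightarrow> 'v" where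
  "seq_Phi X [] n = id"
| "seq_Phi X (M # Ms) n = Phi X M n \<circ> seq_Phi (mcx X M) Ms n"

fun seq_Psi :: "('a, 'v::real_vector) bcx \<Rightarrow> ('a \<times> 'a) set list \<Rightarrow> int \<Rightarrow> 'v \<Rightarrow> 'v" where
  "seq_Psi X [] n = id"
| "seq_Psi X (M # Ms) n = seq_Psi (mcx X M) Ms n \<circ> Psi X M n"

definition nn_free :: "('a, 'v) bcx \<Rightarrow> ('a \<times> 'a) set list \<Rightarrow> int \<Rightarrow> bool" where
  "nn_free X Ms n \<longleftrightarrow> (\<forall>M\<in>set Ms. \<forall>(a, b)\<in>M. \<not> (a \<in> idx X n \<and> b \<in> idx X (n - 1)))"

definition adj :: "'v::real_inner set \<Rightarrow> 'w::real_inner set \<Rightarrow> ('v \<Rightarrow> 'w) \<Rightarrow> 'w \<Rightarrow> 'v" where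
  "adj V W f y = (THE z. z \<in> V \<and> (\<forall>x\<in>V. inner (f x) y = inner x z))"

definition proj :: "'v::real_inner set \<Rightarrow> 'v \<Rightarrow> 'v" where
  "proj W s = (THE w. w \<in> W \<and> (\<forall>u\<in>W. inner (s - w) u = 0))"

end

theory Submission
  imports Defs
begin


locale BC =
  fixes X :: "('a, 'v::real_inner) bcx"
  assumes bc: "based_complex X"
begin

lemma bc1: "\<forall>n. finite (idx X n)"
  using bc unfolding based_complex_def by (elim conjE) assumption
lemma bc2: "\<forall>n<0. idx X n = {}"
  using bc unfolding based_complex_def by (elim conjE) assumption
lemma bc3: "\<forall>n m. n \<noteq> m \<longrightarrow> idx X n \<inter> idx X m = {}"
  using bc unfolding based_complex_def by (elim conjE) assumption
lemma bc4: "\<forall>n. \<forall>a\<in>idx X n. \<exists>B. finite B \<and> cell X a = span B"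
  using bc unfolding based_complex_def by (elim conjE) assumption
lemma bc5: "\<forall>n f. (\<forall>a\<in>idx X n. f a \<in> cell X a) \<and> (\<Sum>a\<in>idx X n. f a) = 0
              \<longrightarrow> (\<forall>a\<in>idx X n. f a = 0)"
  using bc unfolding based_complex_def by (elim conjE) assumption
lemma bc6: "\<forall>n. \<forall>x\<in>chsp X n. \<forall>y\<in>chsp X n. bd X n (x + y) = bd X n x + bd X n y"
  using bc unfolding based_complex_def by (elim conjE) assumption
lemma bc7: "\<forall>n. \<forall>x\<in>chsp X n. \<forall>c. bd X n (c *\<^sub>R x) = c *\<^sub>R bd X n x"
  using bc unfolding based_complex_def by (elim conjE) assumption
lemma bc8: "\<forall>n. \<forall>x\<in>chsp X n. bd X n x \<in> chsp X (n - 1)"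
  using bc unfolding based_complex_def by (elim conjE) assumption
lemma bc9: "\<forall>n. \<forall>x\<in>chsp X n. bd X (n - 1) (bd X n x) = 0"
  using bc unfolding based_complex_def by (elim conjE) assumption

lemma fin_idx: "finite (idx X n)"
  using bc1 by blast

lemma idx_neg: "n < 0 \<Longrightarrow> idx X n = {}"
  using bc2 by blast

lemma idx_disj: "a \<in> idx X n \<Longrightarrow> a \<in> idx X m \<Longrightarrow> n = m"
  using bc3 by blast

lemma cell_span: "a \<in> idx X n \<Longrightarrow> \<exists>B. finite B \<and> cell X a = span B"
  using bc4 by blast

lemma cell_sub: "a \<in> idx X n \<Longrightarrow> subspace (cell X a)"
proof -
  assume "a \<in> idx X n"
  then obtain B where "cell X a = span B" using cell_span by blast
  then show ?thesis by simp
qed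

lemma cell_0: "a \<in> idx X n \<Longrightarrow> 0 \<in> cell X a"
  using cell_sub subspace_0 by blast

lemma cell_add: "a \<in> idx X n \<Longrightarrow> x \<in> cell X a \<Longrightarrow> y \<in> cell X a \<Longrightarrow> x + y \<in> cell X a"
  using cell_sub subspace_add by blast

lemma cell_scale: "a \<in> idx X n \<Longrightarrow> x \<in> cell X a \<Longrightarrow> c *\<^sub>R x \<in> cell X a"
  using cell_sub subspace_scale by blast

lemma cell_neg: "a \<in> idx X n \<Longrightarrow> x \<in> cell X a \<Longrightarrow> - x \<in> cell X a"
  using cell_sub subspace_neg by blast

lemma cell_diff: "a \<in> idx X n \<Longrightarrow> x \<in> cell X a \<Longrightarrow> y \<in> cell X a \<Longrightarrow> x - y \<in> cell X a"
  using cell_sub subspace_diff by blast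

lemma cell_sum: "a \<in> idx X n \<Longrightarrow> (\<And>i. i \<in> S \<Longrightarrow> f i \<in> cell X a) \<Longrightarrow> (\<Sum>i\<in>S. f i) \<in> cell X a"
  using cell_sub[of a n] subspace_sum[of "cell X a" S f] by blast

lemma direct: "(\<And>a. a \<in> idx X n \<Longrightarrow> f a \<in> cell X a) \<Longrightarrow> (\<Sum>a\<in>idx X n. f a) = 0
   \<Longrightarrow> a \<in> idx X n \<Longrightarrow> f a = 0"
  using bc5 by blast

lemma bd_add: "x \<in> chsp X n \<Longrightarrow> y \<in> chsp X n \<Longrightarrow> bd X n (x + y) = bd X n x + bd X n y"
  using bc6 by blast

lemma bd_scale: "x \<in> chsp X n \<Longrightarrow> bd X n (c *\<^sub>R x) = c *\<^sub>R bd X n x"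
  using bc7 by blast

lemma bd_chsp: "x \<in> chsp X n \<Longrightarrow> bd X n x \<in> chsp X (n - 1)"
  using bc8 by blast

lemma bd_bd: "x \<in> chsp X n \<Longrightarrow> bd X (n - 1) (bd X n x) = 0"
  using bc9 by blast

lemma chspI: "(\<And>a. a \<in> idx X n \<Longrightarrow> f a \<in> cell X a) \<Longrightarrow> (\<Sum>a\<in>idx X n. f a) \<in> chsp X n"
  unfolding chsp_def by blast

lemma chspE: "s \<in> chsp X n \<Longrightarrow> (\<And>f. (\<And>a. a \<in> idx X n \<Longrightarrow> f a \<in> cell X a) \<Longrightarrow> s = (\<Sum>a\<in>idx X n. f a) \<Longrightarrow> P) \<Longrightarrow> P"
  unfolding chsp_def by blast

lemma fam_unique:
  assumes "\<And>a. a \<in> idx X n \<Longrightarrow> f a \<in> cell X a" "\<And>a. a \<in> idx X n \<Longrightarrow> g a \<in> cell X a"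
    "(\<Sum>a\<in>idx X n. f a) = (\<Sum>a\<in>idx X n. g a)" "a \<in> idx X n"
  shows "f a = g a"
proof -
  have "(\<Sum>a\<in>idx X n. f a - g a) = 0" using assms(3) by (simp add: sum_subtractf)
  then have "f a - g a = 0"
    using direct[of n "\<lambda>a. f a - g a" a] assms cell_diff by blast
  then show ?thesis by simp
qed

lemma comp_eq:
  assumes "\<And>a. a \<in> idx X n \<Longrightarrow> f a \<in> cell X a" "s = (\<Sum>a\<in>idx X n. f a)"
  shows "comp X n b s = (if b \<in> idx X n then f b else 0)"
proof -
  let ?g = "\<lambda>a. if a \<in> idx X n then f a else 0"
  let ?P = "\<lambda>g. (\<forall>a\<in>idx X n. g a \<in> cell X a) \<and> (\<forall>a. a \<notin> idx X n \<longrightarrow> g a = 0) \<and> s = (\<Sum>a\<in>idx X n. g a)"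
  have P: "?P ?g" using assms by auto
  have U: "g = ?g" if "?P g" for g
  proof
    fix a show "g a = ?g a"
    proof (cases "a \<in> idx X n")
      case True
      have "(\<Sum>a\<in>idx X n. g a) = (\<Sum>a\<in>idx X n. f a)" using that assms by simp
      then show ?thesis using fam_unique[of n g f a] that assms True by auto
    qed (use that in auto)
  qed
  have "(THE g. ?P g) = ?g" using P U by (rule the_equality[where P="?P"])
  then show ?thesis unfolding comp_def by simp
qed

lemma comp_chsp: "s \<in> chsp X n \<Longrightarrow> \<exists>f. (\<forall>a\<in>idx X n. f a \<in> cell X a) \<and> s = (\<Sum>a\<in>idx X n. f a) \<and>
   (\<forall>b. comp X n b s = (if b \<in> idx X n then f b else 0))"
proof -
  assume "s \<in> chsp X n"
  then obtain f where f: "\<And>a. a \<in> idx X n \<Longrightarrow> f a \<in> cell X a" "s = (\<Sum>a\<in>idx X n. f a)"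
    by (auto elim!: chspE)
  then show ?thesis using comp_eq[OF f] by blast
qed

lemma comp_out: "s \<in> chsp X n \<Longrightarrow> b \<notin> idx X n \<Longrightarrow> comp X n b s = 0"
  using comp_chsp by fastforce

lemma comp_cell: "s \<in> chsp X n \<Longrightarrow> b \<in> idx X n \<Longrightarrow> comp X n b s \<in> cell X b"
  using comp_chsp by fastforce

lemma decomp: "s \<in> chsp X n \<Longrightarrow> s = (\<Sum>a\<in>idx X n. comp X n a s)"
proof -
  assume "s \<in> chsp X n"
  then obtain f where f: "\<forall>a\<in>idx X n. f a \<in> cell X a" "s = (\<Sum>a\<in>idx X n. f a)"
     "\<forall>b. comp X n b s = (if b \<in> idx X n then f b else 0)" using comp_chsp by blast
  then show ?thesis by simp
qed

lemma chsp_0: "0 \<in> chsp X n"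
  using chspI[of n "\<lambda>a. 0"] cell_0 by auto

lemma chsp_add: "x \<in> chsp X n \<Longrightarrow> y \<in> chsp X n \<Longrightarrow> x + y \<in> chsp X n"
proof -
  assume "x \<in> chsp X n" "y \<in> chsp X n"
  then obtain f g where f: "\<And>a. a \<in> idx X n \<Longrightarrow> f a \<in> cell X a" "x = (\<Sum>a\<in>idx X n. f a)"
    and g: "\<And>a. a \<in> idx X n \<Longrightarrow> g a \<in> cell X a" "y = (\<Sum>a\<in>idx X n. g a)"
    by (auto elim!: chspE)
  have "(\<Sum>a\<in>idx X n. f a + g a) \<in> chsp X n" by (rule chspI) (use f g cell_add in blast)
  then show ?thesis using f g by (simp add: sum.distrib)
qed

lemma chsp_scale: "x \<in> chsp X n \<Longrightarrow> c *\<^sub>R x \<in> chsp X n"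
proof -
  assume "x \<in> chsp X n"
  then obtain f where f: "\<And>a. a \<in> idx X n \<Longrightarrow> f a \<in> cell X a" "x = (\<Sum>a\<in>idx X n. f a)"
    by (auto elim!: chspE)
  have "(\<Sum>a\<in>idx X n. c *\<^sub>R f a) \<in> chsp X n" by (rule chspI) (use f cell_scale in blast)
  then show ?thesis using f by (simp add: scaleR_sum_right)
qed

lemma chsp_subspace: "subspace (chsp X n)"
  unfolding subspace_def using chsp_0 chsp_add chsp_scale by blast

lemma chsp_neg: "x \<in> chsp X n \<Longrightarrow> - x \<in> chsp X n"
  using chsp_subspace subspace_neg by blast

lemma chsp_diff: "x \<in> chsp X n \<Longrightarrow> y \<in> chsp X n \<Longrightarrow> x - y \<in> chsp X n"
  using chsp_subspace subspace_diff by blast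

lemma chsp_sum: "(\<And>i. i \<in> S \<Longrightarrow> f i \<in> chsp X n) \<Longrightarrow> (\<Sum>i\<in>S. f i) \<in> chsp X n"
  using chsp_subspace[of n] subspace_sum[of "chsp X n" S f] by blast

lemma cell_chsp: "a \<in> idx X n \<Longrightarrow> x \<in> cell X a \<Longrightarrow> x \<in> chsp X n"
proof -
  assume a: "a \<in> idx X n" "x \<in> cell X a"
  have "(\<Sum>b\<in>idx X n. if b = a then x else 0) \<in> chsp X n"
    by (rule chspI) (use a cell_0 in auto)
  then show ?thesis using a fin_idx by (simp add: sum.delta)
qed

lemma comp_of_cell: "a \<in> idx X n \<Longrightarrow> x \<in> cell X a \<Longrightarrow> comp X n b x = (if b = a then x else 0)"
proof -
  assume a: "a \<in> idx X n" "x \<in> cell X a"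
  have "comp X n b (\<Sum>c\<in>idx X n. if c = a then x else 0) = (if b \<in> idx X n then (if b = a then x else 0) else 0)"
    by (rule comp_eq) (use a cell_0 in auto)
  then show ?thesis using a fin_idx by (auto simp add: sum.delta)
qed

lemma comp_add: "x \<in> chsp X n \<Longrightarrow> y \<in> chsp X n \<Longrightarrow> comp X n b (x + y) = comp X n b x + comp X n b y"
proof -
  assume xy: "x \<in> chsp X n" "y \<in> chsp X n"
  have "comp X n b (\<Sum>a\<in>idx X n. comp X n a x + comp X n a y) = (if b \<in> idx X n then comp X n b x + comp X n b y else 0)"
    by (rule comp_eq) (use xy comp_cell cell_add in auto)
  moreover have "(\<Sum>a\<in>idx X n. comp X n a x + comp X n a y) = x + y"
    using decomp xy by (simp add: sum.distrib)
  ultimately show ?thesis using xy comp_out by auto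
qed

lemma comp_scale: "x \<in> chsp X n \<Longrightarrow> comp X n b (c *\<^sub>R x) = c *\<^sub>R comp X n b x"
proof -
  assume x: "x \<in> chsp X n"
  have "comp X n b (\<Sum>a\<in>idx X n. c *\<^sub>R comp X n a x) = (if b \<in> idx X n then c *\<^sub>R comp X n b x else 0)"
    by (rule comp_eq) (use x comp_cell cell_scale in auto)
  moreover have "(\<Sum>a\<in>idx X n. c *\<^sub>R comp X n a x) = c *\<^sub>R x"
    using decomp[OF x] by (simp add: scaleR_sum_right[symmetric])
  ultimately show ?thesis using x comp_out by auto
qed

lemma comp_zero: "comp X n b 0 = 0"
  using comp_scale[where x=0 and n=n and b=b and c=0] chsp_0 by simp

lemma comp_neg: "x \<in> chsp X n \<Longrightarrow> comp X n b (- x) = - comp X n b x"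
  using comp_scale[of x n b "-1"] by simp

lemma comp_diff: "x \<in> chsp X n \<Longrightarrow> y \<in> chsp X n \<Longrightarrow> comp X n b (x - y) = comp X n b x - comp X n b y"
  using comp_add[of x n "-y" b] comp_neg[of y n b] chsp_neg by simp

lemma comp_sum: "finite S \<Longrightarrow> (\<And>i. i \<in> S \<Longrightarrow> f i \<in> chsp X n) \<Longrightarrow> comp X n b (\<Sum>i\<in>S. f i) = (\<Sum>i\<in>S. comp X n b (f i))"
  by (induction S rule: finite_induct) (auto simp: comp_zero comp_add chsp_sum)

lemma bd_zero: "bd X n 0 = 0"
  using bd_scale[where x=0 and n=n and c=0] chsp_0 by simp

lemma bd_neg: "x \<in> chsp X n \<Longrightarrow> bd X n (- x) = - bd X n x"
  using bd_scale[of x n "-1"] by simp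

lemma bd_diff: "x \<in> chsp X n \<Longrightarrow> y \<in> chsp X n \<Longrightarrow> bd X n (x - y) = bd X n x - bd X n y"
  using bd_add[of x n "-y"] bd_neg[of y n] chsp_neg by simp

lemma bd_sum: "finite S \<Longrightarrow> (\<And>i. i \<in> S \<Longrightarrow> f i \<in> chsp X n) \<Longrightarrow> bd X n (\<Sum>i\<in>S. f i) = (\<Sum>i\<in>S. bd X n (f i))"
  by (induction S rule: finite_induct) (auto simp: bd_zero bd_add chsp_sum)

lemma chsp_eqI: "x \<in> chsp X n \<Longrightarrow> y \<in> chsp X n \<Longrightarrow> (\<And>a. a \<in> idx X n \<Longrightarrow> comp X n a x = comp X n a y) \<Longrightarrow> x = y"
proof -
  assume "x \<in> chsp X n" "y \<in> chsp X n" "\<And>a. a \<in> idx X n \<Longrightarrow> comp X n a x = comp X n a y"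
  then show ?thesis using decomp[of x n] decomp[of y n] by (metis (mono_tags, lifting) sum.cong)
qed

lemma deg_eq: "a \<in> idx X n \<Longrightarrow> deg X a = n"
  unfolding deg_def using idx_disj by blast

lemma chsp_neg_deg: "n < 0 \<Longrightarrow> chsp X n = {0}"
  using chsp_0 decomp idx_neg by fastforce

end



definition lin_on :: "'v::real_vector set \<Rightarrow> 'w::real_vector set \<Rightarrow> ('v \<Rightarrow> 'w) \<Rightarrow> bool" where
  "lin_on A B f \<longleftrightarrow> (\<forall>x\<in>A. f x \<in> B) \<and> (\<forall>x\<in>A. \<forall>y\<in>A. f (x + y) = f x + f y) \<and>
     (\<forall>x\<in>A. \<forall>c. f (c *\<^sub>R x) = c *\<^sub>R f x)"

lemma lin_onI: "(\<And>x. x \<in> A \<Longrightarrow> f x \<in> B) \<Longrightarrow> (\<And>x y. x \<in> A \<Longrightarrow> y \<in> A \<Longrightarrow> f (x + y) = f x + f y) \<Longrightarrow>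
   (\<And>x c. x \<in> A \<Longrightarrow> f (c *\<^sub>R x) = c *\<^sub>R f x) \<Longrightarrow> lin_on A B f"
  unfolding lin_on_def by blast

lemma lin_on_in: "lin_on A B f \<Longrightarrow> x \<in> A \<Longrightarrow> f x \<in> B"
  unfolding lin_on_def by blast
lemma lin_on_add: "lin_on A B f \<Longrightarrow> x \<in> A \<Longrightarrow> y \<in> A \<Longrightarrow> f (x + y) = f x + f y"
  unfolding lin_on_def by blast
lemma lin_on_scale: "lin_on A B f \<Longrightarrow> x \<in> A \<Longrightarrow> f (c *\<^sub>R x) = c *\<^sub>R f x"
  unfolding lin_on_def by blast

lemma lin_on_0: "subspace A \<Longrightarrow> lin_on A B f \<Longrightarrow> f 0 = 0"
  using lin_on_scale[of A B f 0 0] subspace_0 by auto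

lemma lin_on_neg: "subspace A \<Longrightarrow> lin_on A B f \<Longrightarrow> x \<in> A \<Longrightarrow> f (- x) = - f x"
  using lin_on_scale[of A B f x "-1"] by simp

lemma lin_on_diff: "subspace A \<Longrightarrow> lin_on A B f \<Longrightarrow> x \<in> A \<Longrightarrow> y \<in> A \<Longrightarrow> f (x - y) = f x - f y"
  using lin_on_add[of A B f x "- y"] lin_on_neg[of A B f y] subspace_neg[of A y] by simp

lemma lin_on_sum:
  assumes A: "subspace A" and f: "lin_on A B f" and S: "finite S" and g: "\<And>i. i \<in> S \<Longrightarrow> g i \<in> A"
  shows "f (\<Sum>i\<in>S. g i) = (\<Sum>i\<in>S. f (g i))"
  using S g
proof (induction S rule: finite_induct)
  case empty then show ?case using lin_on_0[OF A f] by simp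
next
  case (insert i S)
  have "(\<Sum>i\<in>S. g i) \<in> A" using insert A subspace_sum[of A S g] by blast
  then show ?case using insert lin_on_add[OF f, of "g i" "\<Sum>i\<in>S. g i"] by simp
qed

lemma lin_on_o: "lin_on A B f \<Longrightarrow> lin_on B C g \<Longrightarrow> lin_on A C (g \<circ> f)"
  unfolding lin_on_def by simp

lemma lin_on_id: "lin_on A A id"
  unfolding lin_on_def by simp

lemma lin_on_uminus: "subspace B \<Longrightarrow> lin_on A B f \<Longrightarrow> lin_on A B (\<lambda>x. - f x)"
  unfolding lin_on_def by (auto simp: subspace_neg)

lemma lin_on_sumfun:
  assumes C: "subspace C" and S: "finite S" and F: "\<And>i. i \<in> S \<Longrightarrow> lin_on A C (F i)"
  shows "lin_on A C (\<lambda>x. \<Sum>i\<in>S. F i x)"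
  using S F
proof (induction S rule: finite_induct)
  case empty then show ?case unfolding lin_on_def by (simp add: subspace_0[OF C])
next
  case (insert i S)
  have a: "lin_on A C (\<lambda>x. \<Sum>i\<in>S. F i x)" using insert by blast
  have b: "lin_on A C (F i)" using insert by blast
  show ?case
  proof (rule lin_onI)
    fix x assume x: "x \<in> A"
    show "(\<Sum>i\<in>insert i S. F i x) \<in> C" using insert(1,2) lin_on_in[OF a x] lin_on_in[OF b x] subspace_add[OF C] by simp
    { fix y assume y: "y \<in> A"
      show "(\<Sum>i\<in>insert i S. F i (x + y)) = (\<Sum>i\<in>insert i S. F i x) + (\<Sum>i\<in>insert i S. F i y)"
        using insert(1,2) lin_on_add[OF a x y] lin_on_add[OF b x y] by (simp add: ac_simps) }
    fix c show "(\<Sum>i\<in>insert i S. F i (c *\<^sub>R x)) = c *\<^sub>R (\<Sum>i\<in>insert i S. F i x)"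
      using insert(1,2) lin_on_scale[OF a x] lin_on_scale[OF b x] by (simp add: scaleR_add_right)
  qed
qed

lemma lin_on_inv:
  assumes A: "subspace A" and B: "subspace B" and f: "lin_on A B f" and bij: "bij_betw f A B"
  shows "lin_on B A (inv_into A f)"
proof (rule lin_onI)
  fix x assume "x \<in> B" then show "inv_into A f x \<in> A"
    using bij by (metis bij_betw_def inv_into_into)
next
  fix x y assume xy: "x \<in> B" "y \<in> B"
  let ?g = "inv_into A f"
  have gx: "?g x \<in> A" "f (?g x) = x" using xy bij by (auto simp: bij_betw_def inv_into_into f_inv_into_f)
  have gy: "?g y \<in> A" "f (?g y) = y" using xy bij by (auto simp: bij_betw_def inv_into_into f_inv_into_f)
  have "f (?g x + ?g y) = x + y" using gx gy lin_on_add[OF f] by simp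
  moreover have "?g x + ?g y \<in> A" using gx gy A subspace_add by blast
  ultimately show "?g (x + y) = ?g x + ?g y"
    using bij by (metis bij_betw_def inv_into_f_f)
next
  fix x c assume x: "x \<in> B"
  let ?g = "inv_into A f"
  have gx: "?g x \<in> A" "f (?g x) = x" using x bij by (auto simp: bij_betw_def inv_into_into f_inv_into_f)
  have "f (c *\<^sub>R ?g x) = c *\<^sub>R x" using gx lin_on_scale[OF f] by simp
  moreover have "c *\<^sub>R ?g x \<in> A" using gx A subspace_scale by blast
  ultimately show "?g (c *\<^sub>R x) = c *\<^sub>R ?g x"
    using bij by (metis bij_betw_def inv_into_f_f)
qed

lemma path_chain_trancl:
  assumes "\<forall>i. Suc i < length p \<longrightarrow> (p ! i, p ! Suc i) \<in> R"
  shows "i < j \<Longrightarrow> j < length p \<Longrightarrow> (p ! i, p ! j) \<in> R\<^sup>+"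
proof (induction j)
  case 0 then show ?case by simp
next
  case (Suc j)
  have st: "(p ! j, p ! Suc j) \<in> R" using assms Suc.prems by blast
  show ?case
  proof (cases "i = j")
    case True then show ?thesis using st by auto
  next
    case False
    then have "(p ! i, p ! j) \<in> R\<^sup>+" using Suc by simp
    then show ?thesis using st by (meson trancl.trancl_into_trancl)
  qed
qed

locale MM = BC X for X :: "('a, 'v::real_inner) bcx" +
  fixes M :: "('a \<times> 'a) set"
  assumes mm: "morse_matching X M"
begin

abbreviation r where "r \<equiv> rgraph X M"

lemma M_edge: "(a, b) \<in> M \<Longrightarrow> edge X a b"
  using mm unfolding morse_matching_def by blast

lemma M_disj: "e1 \<in> M \<Longrightarrow> e2 \<in> M \<Longrightarrow> e1 \<noteq> e2 \<Longrightarrow> {fst e1, snd e1} \<inter> {fst e2, snd e2} = {}"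
  using mm unfolding morse_matching_def by blast

lemma M_bij: "(a, b) \<in> M \<Longrightarrow> bij_betw (dent X b a) (cell X a) (cell X b)"
  using mm unfolding morse_matching_def by blast

lemma M_po: "partial_order_on (idx X n) (Restr (r\<^sup>*) (idx X n))"
  using mm unfolding morse_matching_def by blast

lemma antisym_r: "u \<in> idx X n \<Longrightarrow> v \<in> idx X n \<Longrightarrow> (u, v) \<in> r\<^sup>* \<Longrightarrow> (v, u) \<in> r\<^sup>* \<Longrightarrow> u = v"
  using M_po[of n] unfolding partial_order_on_def antisym_def by blast

lemma edgeD: "edge X a b \<Longrightarrow> a \<in> idx X (deg X a) \<and> b \<in> idx X (deg X a - 1) \<and> deg X b = deg X a - 1"
  unfolding edge_def using deg_eq by blast

lemma M_deg: "(a, b) \<in> M \<Longrightarrow> a \<in> idx X (deg X a) \<and> b \<in> idx X (deg X a - 1) \<and> deg X b = deg X a - 1"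
  using M_edge edgeD by blast

lemma M_fst: "(a, b) \<in> M \<Longrightarrow> (a, b') \<in> M \<Longrightarrow> b = b'"
  using M_disj[of "(a,b)" "(a,b')"] by auto

lemma M_snd: "(a, b) \<in> M \<Longrightarrow> (a', b) \<in> M \<Longrightarrow> a = a'"
  using M_disj[of "(a,b)" "(a',b)"] by auto

lemma M_irr: "(a, b) \<in> M \<Longrightarrow> a \<noteq> b"
  using M_deg by fastforce

lemma M_ul: "(a, b) \<in> M \<Longrightarrow> (c, a) \<notin> M"
proof
  assume ab: "(a, b) \<in> M" and ca: "(c, a) \<in> M"
  show False
  proof (cases "(a, b) = (c, a)")
    case True then show ?thesis using M_irr ab by auto
  next
    case False then show ?thesis using M_disj[OF ab ca] by auto
  qed
qed

lemma r_cases: "(u, v) \<in> r \<Longrightarrow> (edge X u v \<and> (u, v) \<notin> M) \<or> (v, u) \<in> M"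
  unfolding rgraph_def by blast

lemma r_down: "edge X u v \<Longrightarrow> (u, v) \<notin> M \<Longrightarrow> (u, v) \<in> r"
  unfolding rgraph_def by blast

lemma r_up: "(v, u) \<in> M \<Longrightarrow> (u, v) \<in> r"
  unfolding rgraph_def by blast

lemma r_deg: "(u, v) \<in> r \<Longrightarrow> u \<in> idx X (deg X u) \<and> v \<in> idx X (deg X v) \<and>
   ((deg X v = deg X u - 1 \<and> edge X u v \<and> (u, v) \<notin> M \<and> (v, u) \<notin> M) \<or> (deg X v = deg X u + 1 \<and> (v, u) \<in> M))"
proof -
  assume "(u, v) \<in> r"
  then consider "edge X u v" "(u, v) \<notin> M" | "(v, u) \<in> M" using r_cases by blast
  then show ?thesis
  proof cases
    case 1
    have e: "u \<in> idx X (deg X u) \<and> v \<in> idx X (deg X u - 1) \<and> deg X v = deg X u - 1" using edgeD[OF 1(1)] .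
    have "(v, u) \<notin> M"
    proof
      assume "(v, u) \<in> M"
      then have "deg X u = deg X v - 1" using M_deg by blast
      then show False using e by simp
    qed
    then show ?thesis using 1 e by simp
  next
    case 2 then show ?thesis using M_deg[OF 2] by auto
  qed
qed

definition hb :: "'a \<Rightarrow> int" where
  "hb u = deg X u + (if \<exists>a. (a, u) \<in> M then 1 else 0)"

lemma deg_le_hb: "deg X u \<le> hb u"
  unfolding hb_def by auto

lemma hb_step: "(u, v) \<in> r \<Longrightarrow> hb v \<le> hb u"
proof -
  assume uv: "(u, v) \<in> r"
  from r_deg[OF uv] consider "deg X v = deg X u - 1" | "deg X v = deg X u + 1" "(v, u) \<in> M" by blast
  then show ?thesis
  proof cases
    case 1 then show ?thesis unfolding hb_def by auto
  next
    case 2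
    have "\<not> (\<exists>a. (a, v) \<in> M)" using M_ul[OF 2(2)] by blast
    then show ?thesis using 2 unfolding hb_def by auto
  qed
qed

lemma hb_mono: "(u, v) \<in> r\<^sup>* \<Longrightarrow> hb v \<le> hb u"
  proof (induction rule: rtrancl_induct)
  case base then show ?case by simp
next
  case (step y z) then show ?case using hb_step[OF step(2)] by linarith
qed

lemma reach_node: "(u, v) \<in> r\<^sup>+ \<Longrightarrow> v \<in> idx X (deg X v)"
  by (erule tranclE) (use r_deg in blast)+

lemma reach_deg: "(u, v) \<in> r\<^sup>* \<Longrightarrow> deg X v \<le> hb u"
  using hb_mono deg_le_hb order_trans by blast

lemma up_wit: "(u, v) \<in> r\<^sup>+ \<Longrightarrow> deg X v < deg X u \<or> (\<exists>p q. (q, p) \<in> M \<and> (u, p) \<in> r\<^sup>* \<and> (q, v) \<in> r\<^sup>*)"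
proof (induction rule: trancl_induct)
  case (base y)
  from r_deg[OF base] show ?case by auto
next
  case (step y z)
  from r_deg[OF step(2)] consider "deg X z = deg X y - 1" | "(z, y) \<in> M" by blast
  then show ?case
  proof cases
    case 1
    from step(3) show ?thesis
    proof
      assume "deg X y < deg X u" then show ?thesis using 1 by auto
    next
      assume "\<exists>p q. (q, p) \<in> M \<and> (u, p) \<in> r\<^sup>* \<and> (q, y) \<in> r\<^sup>*"
      then obtain p q where "(q, p) \<in> M" "(u, p) \<in> r\<^sup>*" "(q, y) \<in> r\<^sup>*" by blast
      then show ?thesis using step(2) by (meson rtrancl.rtrancl_into_rtrancl)
    qed
  next
    case 2
    have "(u, y) \<in> r\<^sup>*" using step(1) by auto
    then show ?thesis using 2 by blast
  qed
qed

lemma no_cycle: "(x, x) \<notin> r\<^sup>+"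
proof
  assume cyc: "(x, x) \<in> r\<^sup>+"
  from up_wit[OF cyc] obtain p q where qp: "(q, p) \<in> M" "(x, p) \<in> r\<^sup>*" "(q, x) \<in> r\<^sup>*" by auto
  have "(q, p) \<in> r\<^sup>*" using qp(3) qp(2) by (rule rtrancl_trans)
  moreover have "q \<noteq> p" using M_irr[OF qp(1)] .
  ultimately have "(q, p) \<in> r\<^sup>+" by (simp add: rtrancl_eq_or_trancl)
  then obtain y where qy: "(q, y) \<in> r" and yp: "(y, p) \<in> r\<^sup>*"
  proof (rule converse_tranclE)
    assume "(q, p) \<in> r" then show ?thesis by (rule that) simp
  next
    fix c assume "(q, c) \<in> r" "(c, p) \<in> r\<^sup>+"
    then show ?thesis by (intro that[of c]) (simp_all add: trancl_into_rtrancl)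
  qed
  from r_deg[OF qy] have "(deg X y = deg X q - 1 \<and> (q, y) \<notin> M) \<or> (y, q) \<in> M" by blast
  then show False
  proof
    assume "(y, q) \<in> M" then show False using M_ul[OF qp(1)] by blast
  next
    assume 1: "deg X y = deg X q - 1 \<and> (q, y) \<notin> M"
    have yne: "y \<noteq> p" using 1 qp(1) by blast
    have pq: "(p, q) \<in> r" using r_up[OF qp(1)] .
    have "(p, y) \<in> r\<^sup>*" using pq qy by simp
    moreover have "y \<in> idx X (deg X p)" "p \<in> idx X (deg X p)"
      using r_deg[OF qy] M_deg[OF qp(1)] 1 by auto
    ultimately have "y = p" using antisym_r[of y "deg X p" p] yp by blast
    then show False using yne by simp
  qed
qed

lemma paths_chain: "p \<in> paths X M a b \<Longrightarrow> \<forall>i. Suc i < length p \<longrightarrow> (p ! i, p ! Suc i) \<in> r"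
  unfolding paths_def by blast

lemma paths_distinct: "p \<in> paths X M a b \<Longrightarrow> distinct p"
proof -
  assume p: "p \<in> paths X M a b"
  have ne: "p ! i \<noteq> p ! j" if "i < j" "j < length p" for i j
  proof
    assume eq: "p ! i = p ! j"
    have "(p ! i, p ! j) \<in> r\<^sup>+" by (rule path_chain_trancl[OF paths_chain[OF p] that])
    then have "(p ! i, p ! i) \<in> r\<^sup>+" by (simp only: eq)
    then show False using no_cycle[of "p ! i"] by simp
  qed
  show ?thesis unfolding distinct_conv_nth
  proof (intro allI impI)
    fix i j assume h: "i < length p" "j < length p" "i \<noteq> j"
    show "p ! i \<noteq> p ! j"
    proof (cases "i < j")
      case True show ?thesis by (rule ne[OF True h(2)])
    next
      case False then have "j < i" using h(3) by simp
      then show ?thesis using ne[OF _ h(1), of j] by simp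
    qed
  qed
qed

lemma paths_nth_reach: "p \<in> paths X M a b \<Longrightarrow> k < length p \<Longrightarrow> (a, p ! k) \<in> r\<^sup>*"
proof -
  assume p: "p \<in> paths X M a b" and k: "k < length p"
  have "p \<noteq> []" "hd p = a" using p unfolding paths_def by auto
  then have a: "p ! 0 = a" by (simp add: hd_conv_nth[symmetric])
  show ?thesis
  proof (cases "k = 0")
    case True then show ?thesis using a by simp
  next
    case False then show ?thesis using path_chain_trancl[OF paths_chain[OF p], of 0 k] a k by auto
  qed
qed

lemma paths_reach: "p \<in> paths X M a b \<Longrightarrow> (a, b) \<in> r\<^sup>*"
proof -
  assume p: "p \<in> paths X M a b"
  then have "p \<noteq> []" "last p = b" unfolding paths_def by auto
  then have "p ! (length p - 1) = b" by (simp add: last_conv_nth)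
  then show ?thesis using paths_nth_reach[OF p, of "length p - 1"] \<open>p \<noteq> []\<close> by simp
qed

lemma reach_finite: "finite {v. (a, v) \<in> r\<^sup>*}"
proof -
  have "{v. (a, v) \<in> r\<^sup>*} \<subseteq> insert a (\<Union>k\<in>{0..hb a}. idx X k)"
  proof
    fix v assume "v \<in> {v. (a, v) \<in> r\<^sup>*}"
    then have av: "(a, v) \<in> r\<^sup>*" by simp
    show "v \<in> insert a (\<Union>k\<in>{0..hb a}. idx X k)"
    proof (cases "v = a")
      case False
      then have "(a, v) \<in> r\<^sup>+" using av by (simp add: rtrancl_eq_or_trancl)
      then have v: "v \<in> idx X (deg X v)" using reach_node by blast
      then have "0 \<le> deg X v" using idx_neg by (metis empty_iff not_le)
      moreover have "deg X v \<le> hb a" using reach_deg[OF av] .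
      ultimately show ?thesis using v by auto
    qed simp
  qed
  moreover have "finite (insert a (\<Union>k\<in>{0..hb a}. idx X k))" using fin_idx by simp
  ultimately show ?thesis by (rule finite_subset)
qed

lemma paths_finite: "finite (paths X M a b)"
proof -
  let ?R = "{v. (a, v) \<in> r\<^sup>*}"
  have "paths X M a b \<subseteq> {xs. set xs \<subseteq> ?R \<and> length xs \<le> card ?R}"
  proof
    fix p assume p: "p \<in> paths X M a b"
    have s: "set p \<subseteq> ?R" using paths_nth_reach[OF p] by (auto simp: in_set_conv_nth)
    have "length p = card (set p)" using paths_distinct[OF p] by (simp add: distinct_card)
    also have "\<dots> \<le> card ?R" using s reach_finite by (simp add: card_mono)
    finally show "p \<in> {xs. set xs \<subseteq> ?R \<and> length xs \<le> card ?R}" using s by simp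
  qed
  then show ?thesis using finite_lists_length_le[OF reach_finite] finite_subset by blast
qed

lemma pathmap_snoc: "q \<noteq> [] \<Longrightarrow> pathmap X M (q @ [b]) = stepmap X M (last q) b \<circ> pathmap X M q"
proof (induction q)
  case Nil then show ?case by simp
next
  case (Cons x q)
  show ?case
  proof (cases q)
    case Nil then show ?thesis by simp
  next
    case (Cons y q')
    then show ?thesis using Cons.IH by (simp add: fun_eq_iff)
  qed
qed

lemma paths_self: "paths X M a a = {[a]}"
proof
  show "{[a]} \<subseteq> paths X M a a" unfolding paths_def by auto
  show "paths X M a a \<subseteq> {[a]}"
  proof
    fix p assume p: "p \<in> paths X M a a"
    have ne: "p \<noteq> []" and h: "hd p = a" and l: "last p = a" using p unfolding paths_def by auto
    have "length p = 1"
    proof (rule ccontr)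
      assume "length p \<noteq> 1"
      moreover have "length p \<noteq> 0" using ne by simp
      ultimately have l1: "0 < length p - 1" "length p - 1 < length p" by linarith+
      have "(p ! 0, p ! (length p - 1)) \<in> r\<^sup>+" by (rule path_chain_trancl[OF paths_chain[OF p] l1])
      moreover have "p ! 0 = a" "p ! (length p - 1) = a" using h l ne by (simp add: hd_conv_nth[symmetric], metis last_conv_nth)
      ultimately have "(a, a) \<in> r\<^sup>+" by simp
      then show False using no_cycle by blast
    qed
    then show "p \<in> {[a]}" using h by (cases p) auto
  qed
qed

lemma Gamma_self: "Gamma X M a a x = x"
  unfolding Gamma_def paths_self by simp

lemma Gamma_unreach: "(a, b) \<notin> r\<^sup>* \<Longrightarrow> Gamma X M b a x = 0"
proof -
  assume "(a, b) \<notin> r\<^sup>*"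
  then have "paths X M a b = {}" using paths_reach by blast
  then show ?thesis unfolding Gamma_def by simp
qed

lemma dent_lin: "s \<in> idx X n \<Longrightarrow> t \<in> idx X (n - 1) \<Longrightarrow> lin_on (cell X s) (cell X t) (dent X t s)"
proof (rule lin_onI)
  assume s: "s \<in> idx X n" and t: "t \<in> idx X (n - 1)"
  have d: "deg X s = n" using s deg_eq by blast
  fix x assume x: "x \<in> cell X s"
  then have xc: "x \<in> chsp X n" using cell_chsp s by blast
  show "dent X t s x \<in> cell X t" unfolding dent_def d using comp_cell bd_chsp xc t by blast
  {
    fix y assume y: "y \<in> cell X s"
    then have yc: "y \<in> chsp X n" using cell_chsp s by blast
    show "dent X t s (x + y) = dent X t s x + dent X t s y"
      unfolding dent_def d using bd_add[OF xc yc] comp_add bd_chsp xc yc by simp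
  }
  fix c show "dent X t s (c *\<^sub>R x) = c *\<^sub>R dent X t s x"
    unfolding dent_def d using bd_scale[OF xc] comp_scale bd_chsp xc by simp
qed

lemma dent_out: "s \<in> idx X n \<Longrightarrow> t \<notin> idx X (n - 1) \<Longrightarrow> x \<in> cell X s \<Longrightarrow> dent X t s x = 0"
proof -
  assume s: "s \<in> idx X n" and t: "t \<notin> idx X (n - 1)" and x: "x \<in> cell X s"
  have d: "deg X s = n" using s deg_eq by blast
  show ?thesis unfolding dent_def d using comp_out[OF bd_chsp[OF cell_chsp[OF s x]] t] .
qed

lemma noedge_dent: "s \<in> idx X n \<Longrightarrow> \<not> edge X s t \<Longrightarrow> x \<in> cell X s \<Longrightarrow> dent X t s x = 0"
proof -
  assume s: "s \<in> idx X n" and ne: "\<not> edge X s t" and x: "x \<in> cell X s"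
  show ?thesis
  proof (cases "t \<in> idx X (n - 1)")
    case True then show ?thesis using ne s x unfolding edge_def by blast
  next
    case False then show ?thesis using dent_out s x by blast
  qed
qed

lemma step_lin: "(s, t) \<in> r \<Longrightarrow> lin_on (cell X s) (cell X t) (stepmap X M s t)"
proof -
  assume st: "(s, t) \<in> r"
  from r_deg[OF st] consider "deg X t = deg X s - 1" "(t, s) \<notin> M" | "(t, s) \<in> M" by blast
  then show ?thesis
  proof cases
    case 1
    then have sd: "stepmap X M s t = dent X t s" unfolding stepmap_def by simp
    show ?thesis
    proof -
      have s: "s \<in> idx X (deg X s)" and t: "t \<in> idx X (deg X s - 1)" using r_deg[OF st] 1 by auto
      show ?thesis unfolding sd by (rule dent_lin[OF s t])
    qed
  next
    case 2
    have sm: "stepmap X M s t = (\<lambda>x. - inv_into (cell X t) (dent X s t) x)" unfolding stepmap_def using 2 by simp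
    have tl: "lin_on (cell X t) (cell X s) (dent X s t)" using dent_lin M_deg[OF 2] by blast
    have "lin_on (cell X s) (cell X t) (inv_into (cell X t) (dent X s t))"
      by (rule lin_on_inv[OF _ _ tl M_bij[OF 2]]) (use cell_sub M_deg[OF 2] in blast)+
    then show ?thesis unfolding sm by (rule lin_on_uminus[rotated]) (use cell_sub M_deg[OF 2] in blast)
  qed
qed

lemma pathmap_lin_aux:
  "p \<noteq> [] \<Longrightarrow> (\<forall>i. Suc i < length p \<longrightarrow> (p ! i, p ! Suc i) \<in> r) \<Longrightarrow>
   lin_on (cell X (hd p)) (cell X (last p)) (pathmap X M p)"
proof (induction p)
  case Nil then show ?case by simp
next
  case (Cons s q)
  show ?case
  proof (cases q)
    case Nil then show ?thesis by (simp add: lin_on_def)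
  next
    case (Cons t q')
    have st: "(s, t) \<in> r" using Cons.prems(2) Cons by force
    have ch: "\<forall>i. Suc i < length q \<longrightarrow> (q ! i, q ! Suc i) \<in> r"
      using Cons.prems(2) by force
    have ih: "lin_on (cell X t) (cell X (last q)) (pathmap X M q)" using Cons.IH ch Cons by simp
    have e1: "pathmap X M (s # q) = pathmap X M q \<circ> stepmap X M s t" using Cons by simp
    have e2: "last (s # q) = last q" using Cons by simp
    show ?thesis unfolding e1 e2 list.sel(1) by (rule lin_on_o[OF step_lin[OF st] ih])
  qed
qed

lemma pathmap_lin: "p \<in> paths X M a b \<Longrightarrow> lin_on (cell X a) (cell X b) (pathmap X M p)"
  using pathmap_lin_aux unfolding paths_def by blast

lemma node_sub: "(u, v) \<in> r\<^sup>+ \<Longrightarrow> subspace (cell X v)"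
  using reach_node cell_sub by blast

lemma Gamma_lin: "b \<in> idx X m \<Longrightarrow> lin_on (cell X a) (cell X b) (Gamma X M b a)"
  unfolding Gamma_def
proof (rule lin_on_sumfun)
  assume b: "b \<in> idx X m"
  show "subspace (cell X b)" using cell_sub[OF b] .
  show "finite (paths X M a b)" by (rule paths_finite)
  fix p assume "p \<in> paths X M a b"
  then show "lin_on (cell X a) (cell X b) (pathmap X M p)" by (rule pathmap_lin)
qed

lemma Gamma_lin': "(a, b) \<in> r\<^sup>+ \<Longrightarrow> lin_on (cell X a) (cell X b) (Gamma X M b a)"
  using Gamma_lin reach_node by blast

lemma Gamma_in: "b \<in> idx X m \<Longrightarrow> x \<in> cell X a \<Longrightarrow> Gamma X M b a x \<in> cell X b"
  using Gamma_lin lin_on_in by blast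

definition Pred where "Pred b = {c. (c, b) \<in> r}"
definition Succ where "Succ a = {c. (a, c) \<in> r}"

lemma Pred_finite: "finite (Pred b)"
proof -
  have "Pred b \<subseteq> idx X (deg X b + 1) \<union> idx X (deg X b - 1)"
    unfolding Pred_def using r_deg by fastforce
  then show ?thesis using fin_idx finite_subset by blast
qed

lemma Succ_finite: "finite (Succ a)"
proof -
  have "Succ a \<subseteq> idx X (deg X a + 1) \<union> idx X (deg X a - 1)"
    unfolding Succ_def using r_deg by fastforce
  then show ?thesis using fin_idx finite_subset by blast
qed

lemma paths_snoc: "b \<noteq> a \<Longrightarrow> paths X M a b = (\<Union>c\<in>Pred b. (\<lambda>q. q @ [b]) ` paths X M a c)"
proof
  assume ba: "b \<noteq> a"
  show "paths X M a b \<subseteq> (\<Union>c\<in>Pred b. (\<lambda>q. q @ [b]) ` paths X M a c)"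
  proof
    fix p assume p: "p \<in> paths X M a b"
    have ne: "p \<noteq> []" and h: "hd p = a" and l: "last p = b" and ch: "\<forall>i. Suc i < length p \<longrightarrow> (p ! i, p ! Suc i) \<in> r"
      using p unfolding paths_def by auto
    define q where "q = butlast p"
    have pq: "p = q @ [b]" using append_butlast_last_id[OF ne] l q_def by simp
    have qne: "q \<noteq> []" using pq h ba by (cases q) auto
    have hq: "hd q = a" using h pq qne by simp
    have chq: "\<forall>i. Suc i < length q \<longrightarrow> (q ! i, q ! Suc i) \<in> r"
    proof (intro allI impI)
      fix i assume "Suc i < length q"
      moreover have "Suc i < length p" using pq \<open>Suc i < length q\<close> by simp
      ultimately have "(p ! i, p ! Suc i) \<in> r" using ch by blast
      then show "(q ! i, q ! Suc i) \<in> r" using pq \<open>Suc i < length q\<close> by (simp add: nth_append)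
    qed
    have lastq: "(last q, b) \<in> r"
    proof -
      have "Suc (length q - 1) < length p" using pq qne by simp
      then have "(p ! (length q - 1), p ! Suc (length q - 1)) \<in> r" using ch by blast
      moreover have "p ! (length q - 1) = last q" using pq qne by (simp add: nth_append last_conv_nth)
      moreover have "p ! Suc (length q - 1) = b" using pq qne by (simp add: nth_append)
      ultimately show ?thesis by simp
    qed
    have "q \<in> paths X M a (last q)" unfolding paths_def using qne hq chq by simp
    then show "p \<in> (\<Union>c\<in>Pred b. (\<lambda>q. q @ [b]) ` paths X M a c)"
      using pq lastq unfolding Pred_def by blast
  qed
next
  show "(\<Union>c\<in>Pred b. (\<lambda>q. q @ [b]) ` paths X M a c) \<subseteq> paths X M a b"
  proof
    fix p assume "p \<in> (\<Union>c\<in>Pred b. (\<lambda>q. q @ [b]) ` paths X M a c)"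
    then obtain c q where c: "(c, b) \<in> r" and q: "q \<in> paths X M a c" and pq: "p = q @ [b]"
      unfolding Pred_def by blast
    have ne: "q \<noteq> []" and h: "hd q = a" and l: "last q = c" and ch: "\<forall>i. Suc i < length q \<longrightarrow> (q ! i, q ! Suc i) \<in> r"
      using q unfolding paths_def by auto
    have "\<forall>i. Suc i < length p \<longrightarrow> (p ! i, p ! Suc i) \<in> r"
    proof (intro allI impI)
      fix i assume i: "Suc i < length p"
      show "(p ! i, p ! Suc i) \<in> r"
      proof (cases "Suc i < length q")
        case True then show ?thesis using ch pq by (simp add: nth_append)
      next
        case False
        then have "Suc i = length q" using i pq by simp
        then have ii: "i = length q - 1" by simp
        have "q ! i = c" using ii l ne by (simp add: last_conv_nth)
        moreover have "p ! i = q ! i" using pq ii ne by (simp add: nth_append)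
        moreover have "p ! Suc i = b" using pq \<open>Suc i = length q\<close> by (simp add: nth_append)
        ultimately show ?thesis using c by simp
      qed
    qed
    then show "p \<in> paths X M a b" unfolding paths_def using pq ne h by simp
  qed
qed

lemma Gamma_LS:
  assumes ba: "b \<noteq> a" and a: "a \<in> idx X n" and x: "x \<in> cell X a"
  shows "Gamma X M b a x = (\<Sum>c\<in>Pred b. stepmap X M c b (Gamma X M c a x))"
proof -
  have disj: "\<forall>i\<in>Pred b. \<forall>j\<in>Pred b. i \<noteq> j \<longrightarrow> (\<lambda>q. q @ [b]) ` paths X M a i \<inter> (\<lambda>q. q @ [b]) ` paths X M a j = {}"
    unfolding paths_def by auto
  have "Gamma X M b a x = (\<Sum>c\<in>Pred b. \<Sum>p\<in>(\<lambda>q. q @ [b]) ` paths X M a c. pathmap X M p x)"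
    unfolding Gamma_def paths_snoc[OF ba]
    by (rule sum.UNION_disjoint) (use Pred_finite paths_finite disj in auto)
  also have "\<dots> = (\<Sum>c\<in>Pred b. \<Sum>q\<in>paths X M a c. pathmap X M (q @ [b]) x)"
    by (rule sum.cong[OF refl], subst sum.reindex) (auto simp: inj_on_def)
  also have "\<dots> = (\<Sum>c\<in>Pred b. \<Sum>q\<in>paths X M a c. stepmap X M c b (pathmap X M q x))"
    by (rule sum.cong[OF refl], rule sum.cong[OF refl]) (auto simp: pathmap_snoc paths_def)
  also have "\<dots> = (\<Sum>c\<in>Pred b. stepmap X M c b (Gamma X M c a x))"
  proof (rule sum.cong[OF refl])
    fix c assume c: "c \<in> Pred b"
    have cb: "(c, b) \<in> r" using c unfolding Pred_def by simp
    have cs: "subspace (cell X c)" using r_deg[OF cb] cell_sub by blast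
    show "(\<Sum>q\<in>paths X M a c. stepmap X M c b (pathmap X M q x)) = stepmap X M c b (Gamma X M c a x)"
      unfolding Gamma_def
      by (rule lin_on_sum[symmetric, OF cs step_lin[OF cb] paths_finite])
         (use pathmap_lin x lin_on_in in blast)
  qed
  finally show ?thesis .
qed

lemma paths_cons: "b \<noteq> a \<Longrightarrow> paths X M a b = (\<Union>c\<in>Succ a. (\<lambda>q. a # q) ` paths X M c b)"
proof
  assume ba: "b \<noteq> a"
  show "paths X M a b \<subseteq> (\<Union>c\<in>Succ a. (\<lambda>q. a # q) ` paths X M c b)"
  proof
    fix p assume p: "p \<in> paths X M a b"
    have ne: "p \<noteq> []" and h: "hd p = a" and l: "last p = b" and ch: "\<forall>i. Suc i < length p \<longrightarrow> (p ! i, p ! Suc i) \<in> r"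
      using p unfolding paths_def by auto
    obtain q where pq: "p = a # q" using ne h by (cases p) auto
    have qne: "q \<noteq> []" using pq l ba by auto
    have lq: "last q = b" using pq l qne by simp
    have chq: "\<forall>i. Suc i < length q \<longrightarrow> (q ! i, q ! Suc i) \<in> r"
      using ch pq by (metis Suc_less_eq length_Cons nth_Cons_Suc)
    have "(a, hd q) \<in> r" using ch[rule_format, of 0] pq qne by (simp add: hd_conv_nth)
    moreover have "q \<in> paths X M (hd q) b" unfolding paths_def using qne lq chq by simp
    ultimately show "p \<in> (\<Union>c\<in>Succ a. (\<lambda>q. a # q) ` paths X M c b)"
      using pq unfolding Succ_def by blast
  qed
next
  show "(\<Union>c\<in>Succ a. (\<lambda>q. a # q) ` paths X M c b) \<subseteq> paths X M a b"
  proof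
    fix p assume "p \<in> (\<Union>c\<in>Succ a. (\<lambda>q. a # q) ` paths X M c b)"
    then obtain c q where c: "(a, c) \<in> r" and q: "q \<in> paths X M c b" and pq: "p = a # q"
      unfolding Succ_def by blast
    have ne: "q \<noteq> []" and h: "hd q = c" and l: "last q = b" and ch: "\<forall>i. Suc i < length q \<longrightarrow> (q ! i, q ! Suc i) \<in> r"
      using q unfolding paths_def by auto
    have "\<forall>i. Suc i < length p \<longrightarrow> (p ! i, p ! Suc i) \<in> r"
    proof (intro allI impI)
      fix i assume i: "Suc i < length p"
      show "(p ! i, p ! Suc i) \<in> r"
      proof (cases i)
        case 0 then show ?thesis using pq c h ne by (simp add: hd_conv_nth)
      next
        case (Suc j) then show ?thesis using ch pq i by simp
      qed
    qed
    then show "p \<in> paths X M a b" unfolding paths_def using pq ne l by simp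
  qed
qed

lemma Gamma_FS:
  assumes ba: "b \<noteq> a"
  shows "Gamma X M b a x = (\<Sum>c\<in>Succ a. Gamma X M b c (stepmap X M a c x))"
proof -
  have disj: "\<forall>i\<in>Succ a. \<forall>j\<in>Succ a. i \<noteq> j \<longrightarrow> (\<lambda>q. a # q) ` paths X M i b \<inter> (\<lambda>q. a # q) ` paths X M j b = {}"
    unfolding paths_def by auto
  have "Gamma X M b a x = (\<Sum>c\<in>Succ a. \<Sum>p\<in>(\<lambda>q. a # q) ` paths X M c b. pathmap X M p x)"
    unfolding Gamma_def paths_cons[OF ba]
    by (rule sum.UNION_disjoint) (use Succ_finite paths_finite disj in auto)
  also have "\<dots> = (\<Sum>c\<in>Succ a. \<Sum>q\<in>paths X M c b. pathmap X M (a # q) x)"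
    by (rule sum.cong[OF refl], subst sum.reindex) (auto simp: inj_on_def)
  also have "\<dots> = (\<Sum>c\<in>Succ a. \<Sum>q\<in>paths X M c b. pathmap X M q (stepmap X M a c x))"
  proof (rule sum.cong[OF refl], rule sum.cong[OF refl])
    fix c q assume "q \<in> paths X M c b"
    then obtain q' where "q = c # q'" unfolding paths_def by (cases q) auto
    then show "pathmap X M (a # q) x = pathmap X M q (stepmap X M a c x)" by simp
  qed
  also have "\<dots> = (\<Sum>c\<in>Succ a. Gamma X M b c (stepmap X M a c x))"
    unfolding Gamma_def ..
  finally show ?thesis .
qed

end



context BC
begin

lemma lin_on_mono: "lin_on A B f \<Longrightarrow> B \<subseteq> B' \<Longrightarrow> lin_on A B' f"
  unfolding lin_on_def by blast

lemma comp_lin: "b \<in> idx X n \<Longrightarrow> lin_on (chsp X n) (cell X b) (comp X n b)"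
  by (rule lin_onI) (simp_all add: comp_cell comp_add comp_scale)

lemma cell_sub_chsp: "b \<in> idx X n \<Longrightarrow> cell X b \<subseteq> chsp X n"
  using cell_chsp by blast

lemma sum_cells:
  assumes S: "S \<subseteq> idx X n" and F: "\<And>b. b \<in> S \<Longrightarrow> F b \<in> cell X b"
  shows "(\<Sum>b\<in>S. F b) \<in> chsp X n" "comp X n b' (\<Sum>b\<in>S. F b) = (if b' \<in> S then F b' else 0)"
proof -
  let ?f = "\<lambda>b. if b \<in> S then F b else 0"
  have e: "(\<Sum>b\<in>S. F b) = (\<Sum>b\<in>idx X n. ?f b)"
    using S fin_idx by (simp add: sum.inter_restrict[symmetric] Int_absorb1)
  have f: "\<And>b. b \<in> idx X n \<Longrightarrow> ?f b \<in> cell X b" using F cell_0 by auto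
  show "(\<Sum>b\<in>S. F b) \<in> chsp X n" unfolding e by (rule chspI[OF f])
  show "comp X n b' (\<Sum>b\<in>S. F b) = (if b' \<in> S then F b' else 0)"
    unfolding e using comp_eq[OF f refl, where b=b'] S by auto
qed

lemma comp_bd: "w \<in> chsp X n \<Longrightarrow> comp X (n - 1) t (bd X n w) = (\<Sum>\<beta>\<in>idx X n. dent X t \<beta> (comp X n \<beta> w))"
proof -
  assume w: "w \<in> chsp X n"
  have cc: "\<And>\<beta>. \<beta> \<in> idx X n \<Longrightarrow> comp X n \<beta> w \<in> chsp X n" using comp_cell cell_chsp w by blast
  have "bd X n w = (\<Sum>\<beta>\<in>idx X n. bd X n (comp X n \<beta> w))"
    using bd_sum[where S="idx X n" and f="\<lambda>\<beta>. comp X n \<beta> w" and n=n, OF fin_idx cc] decomp[OF w] by simp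
  then have "comp X (n - 1) t (bd X n w) = (\<Sum>\<beta>\<in>idx X n. comp X (n - 1) t (bd X n (comp X n \<beta> w)))"
    using comp_sum[where S="idx X n" and f="\<lambda>\<beta>. bd X n (comp X n \<beta> w)" and n="n - 1" and b=t, OF fin_idx] bd_chsp cc by simp
  also have "\<dots> = (\<Sum>\<beta>\<in>idx X n. dent X t \<beta> (comp X n \<beta> w))"
    by (rule sum.cong[OF refl]) (simp add: dent_def deg_eq)
  finally show ?thesis .
qed

lemma bd_img_sub: "subspace (bd X m ` chsp X m)"
  unfolding subspace_def
proof (intro conjI ballI allI)
  have "bd X m 0 \<in> bd X m ` chsp X m" using chsp_0 by (rule imageI)
  then show "0 \<in> bd X m ` chsp X m" by (simp add: bd_zero)
  fix x y assume "x \<in> bd X m ` chsp X m" "y \<in> bd X m ` chsp X m"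
  then obtain g h where "g \<in> chsp X m" "h \<in> chsp X m" "x = bd X m g" "y = bd X m h" by blast
  moreover have "bd X m (g + h) \<in> bd X m ` chsp X m" using chsp_add \<open>g \<in> chsp X m\<close> \<open>h \<in> chsp X m\<close> by blast
  ultimately show "x + y \<in> bd X m ` chsp X m" using bd_add by simp
next
  fix c x assume "x \<in> bd X m ` chsp X m"
  then obtain g where "g \<in> chsp X m" "x = bd X m g" by blast
  moreover have "bd X m (c *\<^sub>R g) \<in> bd X m ` chsp X m" using chsp_scale \<open>g \<in> chsp X m\<close> by blast
  ultimately show "c *\<^sub>R x \<in> bd X m ` chsp X m" using bd_scale by simp
qed

end

context MM
begin

lemma crit_iff: "c \<in> crit M \<longleftrightarrow> (\<forall>b. (c, b) \<notin> M \<and> (b, c) \<notin> M)"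
  unfolding crit_def by simp

lemma M_lu: "(a, b) \<in> M \<Longrightarrow> (b, c) \<notin> M"
  using M_ul by blast

lemma hb_le: "hb u \<le> deg X u + 1"
  unfolding hb_def by simp

lemma hb_unmatched_low: "\<not> (\<exists>a. (a, u) \<in> M) \<Longrightarrow> hb u = deg X u"
  unfolding hb_def by simp

lemma G0:
  assumes h: "hb a \<le> n" and \<beta>: "\<beta> \<in> idx X n" and nu: "\<not> (\<exists>b. (\<beta>, b) \<in> M)" and ne: "\<beta> \<noteq> a"
  shows "Gamma X M \<beta> a x = 0"
proof (cases "(a, \<beta>) \<in> r\<^sup>*")
  case False then show ?thesis by (rule Gamma_unreach)
next
  case True
  then have "(a, \<beta>) \<in> r\<^sup>+" using ne by (simp add: rtrancl_eq_or_trancl)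
  then obtain w where aw: "(a, w) \<in> r\<^sup>*" and w\<beta>: "(w, \<beta>) \<in> r"
    by (rule tranclE) (auto intro: trancl_into_rtrancl)
  from r_deg[OF w\<beta>] have "deg X \<beta> = deg X w - 1 \<or> (\<beta>, w) \<in> M" by blast
  then show ?thesis
  proof
    assume "deg X \<beta> = deg X w - 1"
    moreover have "deg X \<beta> = n" using deg_eq \<beta> by blast
    moreover have "deg X w \<le> hb a" using reach_deg[OF aw] .
    ultimately show ?thesis using h by simp
  next
    assume "(\<beta>, w) \<in> M" then show ?thesis using nu by blast
  qed
qed

lemma G_high: "hb a < deg X \<beta> \<Longrightarrow> Gamma X M \<beta> a x = 0"
proof -
  assume h: "hb a < deg X \<beta>"
  have "(a, \<beta>) \<notin> r\<^sup>*"
  proof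
    assume "(a, \<beta>) \<in> r\<^sup>*" then have "deg X \<beta> \<le> hb a" by (rule reach_deg)
    then show False using h by simp
  qed
  then show ?thesis by (rule Gamma_unreach)
qed

lemma stepmap_0: "(p, t) \<in> r \<Longrightarrow> stepmap X M p t 0 = 0"
proof -
  assume pt: "(p, t) \<in> r"
  have "subspace (cell X p)" using r_deg[OF pt] cell_sub by blast
  then show ?thesis using lin_on_0 step_lin[OF pt] by blast
qed

lemma Gamma_0: "Gamma X M b a 0 = 0"
  unfolding Gamma_def
proof (rule sum.neutral, rule ballI)
  fix p assume p: "p \<in> paths X M a b"
  have ne: "p \<noteq> []" and ch: "\<forall>i. Suc i < length p \<longrightarrow> (p ! i, p ! Suc i) \<in> r" using p unfolding paths_def by auto
  have "pathmap X M p 0 = 0" if "p \<noteq> []" "\<forall>i. Suc i < length p \<longrightarrow> (p ! i, p ! Suc i) \<in> r" for p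
    using that
  proof (induction p)
    case Nil then show ?case by simp
  next
    case (Cons s q)
    show ?case
    proof (cases q)
      case Nil then show ?thesis by simp
    next
      case (Cons t q')
      have st: "(s, t) \<in> r" using Cons.prems(2) Cons by force
      have ch: "\<forall>i. Suc i < length q \<longrightarrow> (q ! i, q ! Suc i) \<in> r" using Cons.prems(2) by force
      have "pathmap X M q 0 = 0" using Cons.IH ch Cons by simp
      then show ?thesis using Cons stepmap_0[OF st] by simp
    qed
  qed
  then show "pathmap X M p 0 = 0" using ne ch by blast
qed

lemma LSD:
  assumes t: "t \<in> idx X (n - 1)" and nu: "\<not> (\<exists>p. (t, p) \<in> M)" and ct: "c \<noteq> t"
    and c: "c \<in> idx X m" and v: "v \<in> cell X c"
  shows "Gamma X M t c v = (\<Sum>\<beta>\<in>{\<beta>\<in>idx X n. (\<beta>, t) \<notin> M}. dent X t \<beta> (Gamma X M \<beta> c v))"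
proof -
  let ?S = "{\<beta>\<in>idx X n. (\<beta>, t) \<notin> M}"
  have dt: "deg X t = n - 1" using deg_eq t by blast
  have PS: "Pred t \<subseteq> ?S"
  proof
    fix p assume "p \<in> Pred t"
    then have pt: "(p, t) \<in> r" unfolding Pred_def by simp
    from r_deg[OF pt] have "(deg X t = deg X p - 1 \<and> (p, t) \<notin> M) \<or> (t, p) \<in> M" by blast
    then show "p \<in> ?S"
    proof
      assume "deg X t = deg X p - 1 \<and> (p, t) \<notin> M"
      then show ?thesis using r_deg[OF pt] dt by auto
    next
      assume "(t, p) \<in> M" then show ?thesis using nu by blast
    qed
  qed
  have "Gamma X M t c v = (\<Sum>p\<in>Pred t. stepmap X M p t (Gamma X M p c v))"
    by (rule Gamma_LS[OF ct[symmetric] c v])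
  also have "\<dots> = (\<Sum>p\<in>Pred t. dent X t p (Gamma X M p c v))"
  proof (rule sum.cong[OF refl])
    fix p assume "p \<in> Pred t"
    then have "(t, p) \<notin> M" using nu by blast
    then show "stepmap X M p t (Gamma X M p c v) = dent X t p (Gamma X M p c v)"
      unfolding stepmap_def by simp
  qed
  also have "\<dots> = (\<Sum>\<beta>\<in>?S. dent X t \<beta> (Gamma X M \<beta> c v))"
  proof (rule sum.mono_neutral_left)
    show "finite ?S" using fin_idx by simp
    show "Pred t \<subseteq> ?S" by (rule PS)
    show "\<forall>i\<in>?S - Pred t. dent X t i (Gamma X M i c v) = 0"
    proof
      fix i assume i: "i \<in> ?S - Pred t"
      then have "\<not> edge X i t" using r_down unfolding Pred_def by blast
      moreover have "Gamma X M i c v \<in> cell X i" using Gamma_in i v by blast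
      ultimately show "dent X t i (Gamma X M i c v) = 0" using noedge_dent i by blast
    qed
  qed
  finally show ?thesis .
qed

lemma LSU:
  assumes ab: "(a, b) \<in> M" and a: "a \<in> idx X n" and h: "hb c \<le> n" and ca: "c \<noteq> a"
    and c: "c \<in> idx X m" and v: "v \<in> cell X c"
  shows "Gamma X M a c v = - inv_into (cell X a) (dent X b a) (Gamma X M b c v)"
proof -
  have da: "deg X a = n" using deg_eq a by blast
  have bP: "b \<in> Pred a" using r_up[OF ab] unfolding Pred_def by simp
  have "Gamma X M a c v = (\<Sum>p\<in>Pred a. stepmap X M p a (Gamma X M p c v))"
    by (rule Gamma_LS[OF ca[symmetric] c v])
  also have "\<dots> = stepmap X M b a (Gamma X M b c v) + (\<Sum>p\<in>Pred a - {b}. stepmap X M p a (Gamma X M p c v))"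
    by (rule sum.remove[OF Pred_finite bP])
  also have "(\<Sum>p\<in>Pred a - {b}. stepmap X M p a (Gamma X M p c v)) = 0"
  proof (rule sum.neutral, rule ballI)
    fix p assume p: "p \<in> Pred a - {b}"
    then have pa: "(p, a) \<in> r" unfolding Pred_def by simp
    from r_deg[OF pa] have "deg X a = deg X p - 1 \<or> (a, p) \<in> M" by blast
    then show "stepmap X M p a (Gamma X M p c v) = 0"
    proof
      assume "deg X a = deg X p - 1"
      then have "hb c < deg X p" using da h by simp
      then show ?thesis using G_high stepmap_0[OF pa] by simp
    next
      assume "(a, p) \<in> M" then have "p = b" using M_fst ab by blast
      then show ?thesis using p by simp
    qed
  qed
  finally show ?thesis using ab unfolding stepmap_def by simp
qed

lemma dent_inv:
  assumes ab: "(a, b) \<in> M" and w: "w \<in> cell X b"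
  shows "dent X b a (inv_into (cell X a) (dent X b a) w) = w"
  using M_bij[OF ab] w by (simp add: bij_betw_def f_inv_into_f)

lemma inv_in:
  assumes ab: "(a, b) \<in> M" and w: "w \<in> cell X b"
  shows "inv_into (cell X a) (dent X b a) w \<in> cell X a"
proof -
  have "cell X b = dent X b a ` cell X a" using M_bij[OF ab] by (simp add: bij_betw_def)
  then show ?thesis using w by (simp add: inv_into_into)
qed

lemma dent_lin_M: "(a, b) \<in> M \<Longrightarrow> lin_on (cell X a) (cell X b) (dent X b a)"
  using M_deg dent_lin by blast

text \<open>The key cancellation: the boundary of Phi has no component on lower-matched cells.\<close>
lemma cancel_cell:
  assumes ab: "(a, b) \<in> M" and a: "a \<in> idx X n" and c: "c \<in> idx X n" and cc: "c \<in> crit M"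
    and v: "v \<in> cell X c"
  shows "(\<Sum>\<beta>\<in>idx X n. dent X b \<beta> (Gamma X M \<beta> c v)) = 0"
proof -
  have b: "b \<in> idx X (n - 1)" using M_deg[OF ab] deg_eq a by auto
  have ca: "c \<noteq> a" using cc ab crit_iff by blast
  have cb: "c \<noteq> b" using cc ab crit_iff by blast
  have hc: "hb c \<le> n" using hb_unmatched_low[of c] cc crit_iff deg_eq c by auto
  let ?w = "Gamma X M b c v"
  have w: "?w \<in> cell X b" using Gamma_in b v by blast
  have sub: "subspace (cell X a)" using cell_sub a by blast
  have "dent X b a (Gamma X M a c v) = dent X b a (- inv_into (cell X a) (dent X b a) ?w)"
    using LSU[OF ab a hc ca c v] by simp
  also have "\<dots> = - dent X b a (inv_into (cell X a) (dent X b a) ?w)"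
    by (rule lin_on_neg[OF sub dent_lin_M[OF ab] inv_in[OF ab w]])
  also have "\<dots> = - ?w" using dent_inv[OF ab w] by simp
  finally have e1: "dent X b a (Gamma X M a c v) = - ?w" .
  have S: "{\<beta>\<in>idx X n. (\<beta>, b) \<notin> M} = idx X n - {a}" using M_snd ab by blast
  have nu: "\<not> (\<exists>p. (b, p) \<in> M)" using M_lu[OF ab] by blast
  have e2: "?w = (\<Sum>\<beta>\<in>idx X n - {a}. dent X b \<beta> (Gamma X M \<beta> c v))"
    using LSD[OF b nu cb c v] S by simp
  have "(\<Sum>\<beta>\<in>idx X n. dent X b \<beta> (Gamma X M \<beta> c v)) =
        dent X b a (Gamma X M a c v) + (\<Sum>\<beta>\<in>idx X n - {a}. dent X b \<beta> (Gamma X M \<beta> c v))"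
    by (rule sum.remove[OF fin_idx a])
  then show ?thesis using e1 e2 by simp
qed

lemma crit_cell:
  assumes c': "c' \<in> idx X (n - 1)" and cc': "c' \<in> crit M" and c: "c \<in> idx X n" and v: "v \<in> cell X c"
  shows "(\<Sum>\<beta>\<in>idx X n. dent X c' \<beta> (Gamma X M \<beta> c v)) = Gamma X M c' c v"
proof -
  have ne: "c \<noteq> c'"
  proof
    assume "c = c'" then have "n = n - 1" using idx_disj c c' by blast
    then show False by simp
  qed
  have nu: "\<not> (\<exists>p. (c', p) \<in> M)" using cc' crit_iff by blast
  have S: "{\<beta>\<in>idx X n. (\<beta>, c') \<notin> M} = idx X n" using cc' crit_iff by blast
  show ?thesis using LSD[OF c' nu ne c v] S by simp
qed

end



context MM
begin

lemma mcx_idx[simp]: "idx (mcx X M) n = idx X n \<inter> crit M"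
  by (simp add: mcx_def)
lemma mcx_cell[simp]: "cell (mcx X M) = cell X"
  by (simp add: mcx_def)
lemma mcx_bd: "bd (mcx X M) n x = (\<Sum>a\<in>idx X n \<inter> crit M. \<Sum>b\<in>idx X (n - 1) \<inter> crit M. Gamma X M b a (comp X n a x))"
  by (simp add: mcx_def)

lemma chsp_mcx_iff: "y \<in> chsp (mcx X M) n \<longleftrightarrow> y \<in> chsp X n \<and> (\<forall>b. b \<notin> crit M \<longrightarrow> comp X n b y = 0)"
proof
  assume "y \<in> chsp (mcx X M) n"
  then obtain f where f: "\<And>a. a \<in> idx X n \<inter> crit M \<Longrightarrow> f a \<in> cell X a" "y = (\<Sum>a\<in>idx X n \<inter> crit M. f a)"
    unfolding chsp_def by auto
  have S: "idx X n \<inter> crit M \<subseteq> idx X n" by blast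
  show "y \<in> chsp X n \<and> (\<forall>b. b \<notin> crit M \<longrightarrow> comp X n b y = 0)"
    using sum_cells[OF S f(1)] f(2) by auto
next
  assume h: "y \<in> chsp X n \<and> (\<forall>b. b \<notin> crit M \<longrightarrow> comp X n b y = 0)"
  have "y = (\<Sum>a\<in>idx X n. comp X n a y)" using decomp h by blast
  also have "\<dots> = (\<Sum>a\<in>idx X n \<inter> crit M. comp X n a y)"
    by (rule sum.mono_neutral_right) (use fin_idx h in auto)
  finally have e: "y = (\<Sum>a\<in>idx X n \<inter> crit M. comp X n a y)" .
  have "\<forall>a\<in>idx X n \<inter> crit M. comp X n a y \<in> cell X a" using comp_cell h by blast
  then show "y \<in> chsp (mcx X M) n" unfolding chsp_def using e by auto
qed

lemma chsp_mcx_sub: "y \<in> chsp (mcx X M) n \<Longrightarrow> y \<in> chsp X n"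
  using chsp_mcx_iff by blast

lemma crit_hb: "c \<in> idx X n \<Longrightarrow> c \<in> crit M \<Longrightarrow> hb c = n"
  using hb_unmatched_low[of c] crit_iff deg_eq by auto

abbreviation ph where "ph n y \<beta> \<equiv> (\<Sum>c\<in>idx X n \<inter> crit M. Gamma X M \<beta> c (comp X n c y))"

lemma ph_cell: "y \<in> chsp X n \<Longrightarrow> \<beta> \<in> idx X n \<Longrightarrow> ph n y \<beta> \<in> cell X \<beta>"
proof -
  assume y: "y \<in> chsp X n" and b: "\<beta> \<in> idx X n"
  show ?thesis
  proof (rule cell_sum[OF b])
    fix c assume "c \<in> idx X n \<inter> crit M"
    then show "Gamma X M \<beta> c (comp X n c y) \<in> cell X \<beta>" using Gamma_in[OF b] comp_cell[OF y] by blast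
  qed
qed

lemma Phi_swap: "Phi X M n y = (\<Sum>\<beta>\<in>idx X n. ph n y \<beta>)"
  unfolding Phi_def by (rule sum.swap)

lemma Phi_chsp: "y \<in> chsp X n \<Longrightarrow> Phi X M n y \<in> chsp X n"
  unfolding Phi_swap by (rule chspI) (rule ph_cell, assumption+)

lemma comp_Phi: "y \<in> chsp X n \<Longrightarrow> comp X n \<beta> (Phi X M n y) = (if \<beta> \<in> idx X n then ph n y \<beta> else 0)"
  unfolding Phi_swap by (rule comp_eq[OF ph_cell refl], assumption+)

lemma Phi_crit: "y \<in> chsp X n \<Longrightarrow> c' \<in> idx X n \<Longrightarrow> c' \<in> crit M \<Longrightarrow> comp X n c' (Phi X M n y) = comp X n c' y"
proof -
  assume y: "y \<in> chsp X n" and c': "c' \<in> idx X n" "c' \<in> crit M"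
  have c'K: "c' \<in> idx X n \<inter> crit M" using c' by simp
  have "ph n y c' = Gamma X M c' c' (comp X n c' y) + (\<Sum>c\<in>idx X n \<inter> crit M - {c'}. Gamma X M c' c (comp X n c y))"
    by (rule sum.remove) (use fin_idx c'K in auto)
  also have "(\<Sum>c\<in>idx X n \<inter> crit M - {c'}. Gamma X M c' c (comp X n c y)) = 0"
  proof (rule sum.neutral, rule ballI)
    fix c assume c: "c \<in> idx X n \<inter> crit M - {c'}"
    have "hb c = n" using crit_hb[of c n] c by blast
    then have "hb c \<le> n" by simp
    moreover have "\<not> (\<exists>b. (c', b) \<in> M)" using c' crit_iff by blast
    ultimately show "Gamma X M c' c (comp X n c y) = 0" using G0 c' c by blast
  qed
  finally show ?thesis using comp_Phi[OF y] c' Gamma_self by simp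
qed

lemma Phi_low: "y \<in> chsp X n \<Longrightarrow> (a, \<beta>) \<in> M \<Longrightarrow> comp X n \<beta> (Phi X M n y) = 0"
proof -
  assume y: "y \<in> chsp X n" and a\<beta>: "(a, \<beta>) \<in> M"
  show ?thesis
  proof (cases "\<beta> \<in> idx X n")
    case False then show ?thesis using comp_Phi[OF y] by simp
  next
    case True
    have "ph n y \<beta> = 0"
    proof (rule sum.neutral, rule ballI)
      fix c assume c: "c \<in> idx X n \<inter> crit M"
      have "hb c = n" using crit_hb[of c n] c by blast
    then have "hb c \<le> n" by simp
      moreover have "\<not> (\<exists>b. (\<beta>, b) \<in> M)" using M_lu[OF a\<beta>] by blast
      moreover have "\<beta> \<noteq> c" using c a\<beta> crit_iff by blast
      ultimately show "Gamma X M \<beta> c (comp X n c y) = 0" using G0 True by blast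
    qed
    then show ?thesis using comp_Phi[OF y] True by simp
  qed
qed

lemma dent_sum_swap:
  assumes t: "t \<in> idx X (n - 1)" and y: "y \<in> chsp X n"
  shows "comp X (n - 1) t (bd X n (Phi X M n y)) =
    (\<Sum>c\<in>idx X n \<inter> crit M. \<Sum>\<beta>\<in>idx X n. dent X t \<beta> (Gamma X M \<beta> c (comp X n c y)))"
proof -
  have "comp X (n - 1) t (bd X n (Phi X M n y)) = (\<Sum>\<beta>\<in>idx X n. dent X t \<beta> (comp X n \<beta> (Phi X M n y)))"
    by (rule comp_bd[OF Phi_chsp[OF y]])
  also have "\<dots> = (\<Sum>\<beta>\<in>idx X n. dent X t \<beta> (ph n y \<beta>))"
    by (rule sum.cong[OF refl]) (simp add: comp_Phi[OF y])
  also have "\<dots> = (\<Sum>\<beta>\<in>idx X n. \<Sum>c\<in>idx X n \<inter> crit M. dent X t \<beta> (Gamma X M \<beta> c (comp X n c y)))"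
  proof (rule sum.cong[OF refl])
    fix \<beta> assume \<beta>: "\<beta> \<in> idx X n"
    show "dent X t \<beta> (ph n y \<beta>) = (\<Sum>c\<in>idx X n \<inter> crit M. dent X t \<beta> (Gamma X M \<beta> c (comp X n c y)))"
      by (rule lin_on_sum[OF cell_sub[OF \<beta>] dent_lin[OF \<beta> t]]) (use fin_idx Gamma_in[OF \<beta>] comp_cell[OF y] in auto)
  qed
  also have "\<dots> = (\<Sum>c\<in>idx X n \<inter> crit M. \<Sum>\<beta>\<in>idx X n. dent X t \<beta> (Gamma X M \<beta> c (comp X n c y)))"
    by (rule sum.swap)
  finally show ?thesis .
qed

lemma Phi_bd_low:
  assumes y: "y \<in> chsp X n" and ab: "(a, b) \<in> M" and a: "a \<in> idx X n"
  shows "comp X (n - 1) b (bd X n (Phi X M n y)) = 0"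
proof -
  have b: "b \<in> idx X (n - 1)" using M_deg[OF ab] deg_eq a by auto
  show ?thesis unfolding dent_sum_swap[OF b y]
  proof (rule sum.neutral, rule ballI)
    fix c assume c: "c \<in> idx X n \<inter> crit M"
    show "(\<Sum>\<beta>\<in>idx X n. dent X b \<beta> (Gamma X M \<beta> c (comp X n c y))) = 0"
      by (rule cancel_cell[OF ab a]) (use c comp_cell y in auto)
  qed
qed

lemma Phi_bd_crit:
  assumes y: "y \<in> chsp X n" and c': "c' \<in> idx X (n - 1)" "c' \<in> crit M"
  shows "comp X (n - 1) c' (bd X n (Phi X M n y)) = (\<Sum>c\<in>idx X n \<inter> crit M. Gamma X M c' c (comp X n c y))"
  unfolding dent_sum_swap[OF c'(1) y]
  by (rule sum.cong[OF refl], rule crit_cell[OF c']) (use comp_cell y in auto)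

lemma bdm_swap: "bd (mcx X M) n y = (\<Sum>b\<in>idx X (n - 1) \<inter> crit M. \<Sum>a\<in>idx X n \<inter> crit M. Gamma X M b a (comp X n a y))"
  unfolding mcx_bd by (rule sum.swap)

lemma bdm_cell: "y \<in> chsp X n \<Longrightarrow> b \<in> idx X (n - 1) \<Longrightarrow> (\<Sum>a\<in>idx X n \<inter> crit M. Gamma X M b a (comp X n a y)) \<in> cell X b"
proof -
  assume y: "y \<in> chsp X n" and b: "b \<in> idx X (n - 1)"
  show ?thesis
  proof (rule cell_sum[OF b])
    fix c assume "c \<in> idx X n \<inter> crit M"
    then show "Gamma X M b c (comp X n c y) \<in> cell X b" using Gamma_in[OF b] comp_cell[OF y] by blast
  qed
qed

lemma bdm_props:
  assumes y: "y \<in> chsp X n"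
  shows "bd (mcx X M) n y \<in> chsp X (n - 1)"
    "comp X (n - 1) c' (bd (mcx X M) n y) = (if c' \<in> idx X (n - 1) \<inter> crit M then (\<Sum>a\<in>idx X n \<inter> crit M. Gamma X M c' a (comp X n a y)) else 0)"
proof -
  have S: "idx X (n - 1) \<inter> crit M \<subseteq> idx X (n - 1)" by blast
  have F: "\<And>b. b \<in> idx X (n - 1) \<inter> crit M \<Longrightarrow> (\<Sum>a\<in>idx X n \<inter> crit M. Gamma X M b a (comp X n a y)) \<in> cell X b"
    using bdm_cell[OF y] by blast
  show "bd (mcx X M) n y \<in> chsp X (n - 1)" unfolding bdm_swap by (rule sum_cells(1)[OF S F])
  show "comp X (n - 1) c' (bd (mcx X M) n y) = (if c' \<in> idx X (n - 1) \<inter> crit M then (\<Sum>a\<in>idx X n \<inter> crit M. Gamma X M c' a (comp X n a y)) else 0)"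
    unfolding bdm_swap by (rule sum_cells(2)[OF S F])
qed

lemma bdm_mcx: "y \<in> chsp X n \<Longrightarrow> bd (mcx X M) n y \<in> chsp (mcx X M) (n - 1)"
  unfolding chsp_mcx_iff using bdm_props by simp

lemma Gamma_comp_lin: "a \<in> idx X n \<Longrightarrow> b \<in> idx X m \<Longrightarrow> lin_on (chsp X n) (chsp X m) (\<lambda>y. Gamma X M b a (comp X n a y))"
proof -
  assume a: "a \<in> idx X n" and b: "b \<in> idx X m"
  have "lin_on (chsp X n) (cell X b) (Gamma X M b a \<circ> comp X n a)"
    by (rule lin_on_o[OF comp_lin[OF a] Gamma_lin[OF b]])
  then show ?thesis using lin_on_mono cell_sub_chsp[OF b] by (simp add: comp_def o_def)
qed

lemma Phi_lin: "lin_on (chsp X n) (chsp X n) (Phi X M n)"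
  unfolding Phi_def
  by (rule lin_on_sumfun[OF chsp_subspace], simp add: fin_idx, rule lin_on_sumfun[OF chsp_subspace],
      simp add: fin_idx, rule Gamma_comp_lin) auto

lemma bdm_lin: "lin_on (chsp X n) (chsp X (n - 1)) (bd (mcx X M) n)"
  unfolding mcx_bd
  by (rule lin_on_sumfun[OF chsp_subspace], simp add: fin_idx, rule lin_on_sumfun[OF chsp_subspace],
      simp add: fin_idx, rule Gamma_comp_lin) auto

lemma Psi_lin: "lin_on (chsp X n) (chsp X n) (Psi X M n)"
  unfolding Psi_def
  by (rule lin_on_sumfun[OF chsp_subspace], simp add: fin_idx, rule lin_on_sumfun[OF chsp_subspace],
      simp add: fin_idx, rule Gamma_comp_lin) auto

abbreviation ps where "ps n x \<beta> \<equiv> (\<Sum>a\<in>idx X n. Gamma X M \<beta> a (comp X n a x))"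

lemma Psi_props:
  assumes x: "x \<in> chsp X n"
  shows "Psi X M n x \<in> chsp X n"
    "comp X n c' (Psi X M n x) = (if c' \<in> idx X n \<inter> crit M then ps n x c' else 0)"
proof -
  have e: "Psi X M n x = (\<Sum>b\<in>idx X n \<inter> crit M. ps n x b)" unfolding Psi_def by (rule sum.swap)
  have S: "idx X n \<inter> crit M \<subseteq> idx X n" by blast
  have F: "\<And>b. b \<in> idx X n \<inter> crit M \<Longrightarrow> ps n x b \<in> cell X b"
  proof -
    fix b assume "b \<in> idx X n \<inter> crit M"
    then have b: "b \<in> idx X n" by simp
    show "ps n x b \<in> cell X b"
    proof (rule cell_sum[OF b])
      fix c assume "c \<in> idx X n"
      then show "Gamma X M b c (comp X n c x) \<in> cell X b" using Gamma_in[OF b] comp_cell[OF x] by blast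
    qed
  qed
  show "Psi X M n x \<in> chsp X n" unfolding e by (rule sum_cells(1)[OF S F])
  show "comp X n c' (Psi X M n x) = (if c' \<in> idx X n \<inter> crit M then ps n x c' else 0)"
    unfolding e by (rule sum_cells(2)[OF S F])
qed

lemma Psi_mcx: "x \<in> chsp X n \<Longrightarrow> Psi X M n x \<in> chsp (mcx X M) n"
  unfolding chsp_mcx_iff using Psi_props by simp

definition below :: "int \<Rightarrow> 'a \<Rightarrow> 'a set" where
  "below m a = {a' \<in> idx X m. (a', a) \<in> r\<^sup>+}"
definition above :: "int \<Rightarrow> 'a \<Rightarrow> 'a set" where
  "above m a = {d \<in> idx X m. (a, d) \<in> r\<^sup>+}"

lemma below_less: "(a', a) \<in> r\<^sup>+ \<Longrightarrow> a' \<in> idx X m \<Longrightarrow> card (below m a') < card (below m a)"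
proof -
  assume aa: "(a', a) \<in> r\<^sup>+" and a': "a' \<in> idx X m"
  have "below m a' \<subseteq> below m a" unfolding below_def using aa by (auto intro: trancl_trans)
  moreover have "a' \<in> below m a" unfolding below_def using aa a' by simp
  moreover have "a' \<notin> below m a'" unfolding below_def using no_cycle by blast
  ultimately have "below m a' < below m a" by blast
  moreover have "finite (below m a)" unfolding below_def using fin_idx by simp
  ultimately show ?thesis by (simp add: psubset_card_mono)
qed

lemma above_less: "(a, d) \<in> r\<^sup>+ \<Longrightarrow> d \<in> idx X m \<Longrightarrow> card (above m d) < card (above m a)"
proof -
  assume aa: "(a, d) \<in> r\<^sup>+" and d: "d \<in> idx X m"
  have "above m d \<subseteq> above m a" unfolding above_def using aa by (auto intro: trancl_trans)
  moreover have "d \<in> above m a" unfolding above_def using aa d by simp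
  moreover have "d \<notin> above m d" unfolding above_def using no_cycle by blast
  ultimately have "above m d < above m a" by blast
  moreover have "finite (above m a)" unfolding above_def using fin_idx by simp
  ultimately show ?thesis by (simp add: psubset_card_mono)
qed

lemma dent_inj0: "(a, b) \<in> M \<Longrightarrow> v \<in> cell X a \<Longrightarrow> dent X b a v = 0 \<Longrightarrow> v = 0"
proof -
  assume ab: "(a, b) \<in> M" and v: "v \<in> cell X a" and d: "dent X b a v = 0"
  have a: "a \<in> idx X (deg X a)" using M_deg[OF ab] by blast
  have "dent X b a 0 = 0" using lin_on_0[OF cell_sub[OF a] dent_lin_M[OF ab]] .
  moreover have "inj_on (dent X b a) (cell X a)" using M_bij[OF ab] by (simp add: bij_betw_def)
  ultimately show "v = 0" using v d cell_0[OF a] by (metis inj_onD)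
qed

lemma UL:
  assumes x: "x \<in> chsp X m"
    and h1: "\<And>c. c \<in> idx X m \<Longrightarrow> \<not> (\<exists>b. (c, b) \<in> M) \<Longrightarrow> comp X m c x = 0"
    and h2: "\<And>a b. (a, b) \<in> M \<Longrightarrow> a \<in> idx X m \<Longrightarrow> comp X (m - 1) b (bd X m x) = 0"
  shows "x = 0"
proof -
  have all: "a \<in> idx X m \<longrightarrow> comp X m a x = 0" for a
  proof (induction a rule: measure_induct_rule[where f="\<lambda>a. card (below m a)"])
    case (less a)
    show ?case
    proof
      assume a: "a \<in> idx X m"
      show "comp X m a x = 0"
      proof (cases "\<exists>b. (a, b) \<in> M")
        case False then show ?thesis using h1 a by blast
      next
        case True
        then obtain b where ab: "(a, b) \<in> M" by blast
        have b: "b \<in> idx X (m - 1)" using M_deg[OF ab] deg_eq a by auto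
        have "comp X (m - 1) b (bd X m x) = (\<Sum>\<beta>\<in>idx X m. dent X b \<beta> (comp X m \<beta> x))"
          by (rule comp_bd[OF x])
        also have "\<dots> = dent X b a (comp X m a x) + (\<Sum>\<beta>\<in>idx X m - {a}. dent X b \<beta> (comp X m \<beta> x))"
          by (rule sum.remove[OF fin_idx a])
        also have "(\<Sum>\<beta>\<in>idx X m - {a}. dent X b \<beta> (comp X m \<beta> x)) = 0"
        proof (rule sum.neutral, rule ballI)
          fix \<beta> assume \<beta>: "\<beta> \<in> idx X m - {a}"
          show "dent X b \<beta> (comp X m \<beta> x) = 0"
          proof (cases "edge X \<beta> b")
            case False then show ?thesis using noedge_dent \<beta> comp_cell x by blast
          next
            case True
            have "(\<beta>, b) \<notin> M" using M_snd ab \<beta> by blast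
            then have "(\<beta>, b) \<in> r" using r_down True by blast
            moreover have "(b, a) \<in> r" using r_up[OF ab] .
            ultimately have "(\<beta>, a) \<in> r\<^sup>+" by simp
            then have "card (below m \<beta>) < card (below m a)" using below_less \<beta> by blast
            then have "comp X m \<beta> x = 0" using less \<beta> by blast
            then show ?thesis using lin_on_0[OF cell_sub dent_lin] \<beta> b by auto
          qed
        qed
        finally have "dent X b a (comp X m a x) = 0" using h2[OF ab a] by simp
        then show ?thesis using dent_inj0[OF ab] comp_cell x a by blast
      qed
    qed
  qed
  show ?thesis using decomp[OF x] all by simp
qed

end



context MM
begin

lemma Phi_chain:
  assumes ym: "y \<in> chsp (mcx X M) n"
  shows "bd X n (Phi X M n y) = Phi X M (n - 1) (bd (mcx X M) n y)"
proof -
  have y: "y \<in> chsp X n" using chsp_mcx_sub[OF ym] .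
  let ?d = "bd (mcx X M) n y"
  have d: "?d \<in> chsp X (n - 1)" using bdm_props(1)[OF y] .
  have p1: "bd X n (Phi X M n y) \<in> chsp X (n - 1)" using bd_chsp Phi_chsp y by blast
  have p2: "Phi X M (n - 1) ?d \<in> chsp X (n - 1)" using Phi_chsp d by blast
  let ?w = "bd X n (Phi X M n y) - Phi X M (n - 1) ?d"
  have w: "?w \<in> chsp X (n - 1)" using chsp_diff p1 p2 by blast
  have "?w = 0"
  proof (rule UL[OF w])
    fix c assume c: "c \<in> idx X (n - 1)" and nu: "\<not> (\<exists>b. (c, b) \<in> M)"
    show "comp X (n - 1) c ?w = 0"
    proof (cases "c \<in> crit M")
      case True
      have "comp X (n - 1) c ?w = comp X (n - 1) c (bd X n (Phi X M n y)) - comp X (n - 1) c (Phi X M (n - 1) ?d)"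
        using comp_diff p1 p2 by blast
      also have "comp X (n - 1) c (Phi X M (n - 1) ?d) = comp X (n - 1) c ?d"
        using Phi_crit[OF d c True] .
      also have "comp X (n - 1) c ?d = (\<Sum>a\<in>idx X n \<inter> crit M. Gamma X M c a (comp X n a y))"
        using bdm_props(2)[OF y, of c] c True by simp
      also have "comp X (n - 1) c (bd X n (Phi X M n y)) = (\<Sum>a\<in>idx X n \<inter> crit M. Gamma X M c a (comp X n a y))"
        using Phi_bd_crit[OF y c True] .
      finally show ?thesis by simp
    next
      case False
      then obtain a where ac: "(a, c) \<in> M" using nu crit_iff by blast
      have "deg X a - 1 = n - 1" using M_deg[OF ac] c idx_disj by blast
      then have a: "a \<in> idx X n" using M_deg[OF ac] by simp
      have "comp X (n - 1) c ?w = comp X (n - 1) c (bd X n (Phi X M n y)) - comp X (n - 1) c (Phi X M (n - 1) ?d)"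
        using comp_diff p1 p2 by blast
      then show ?thesis using Phi_bd_low[OF y ac a] Phi_low[OF d ac] by simp
    qed
  next
    fix a b assume ab: "(a, b) \<in> M" and a: "a \<in> idx X (n - 1)"
    have "bd X (n - 1) ?w = bd X (n - 1) (bd X n (Phi X M n y)) - bd X (n - 1) (Phi X M (n - 1) ?d)"
      using bd_diff p1 p2 by blast
    also have "bd X (n - 1) (bd X n (Phi X M n y)) = 0" using bd_bd Phi_chsp y by blast
    finally have e: "bd X (n - 1) ?w = - bd X (n - 1) (Phi X M (n - 1) ?d)" by simp
    have q: "bd X (n - 1) (Phi X M (n - 1) ?d) \<in> chsp X (n - 1 - 1)" using bd_chsp p2 by blast
    show "comp X (n - 1 - 1) b (bd X (n - 1) ?w) = 0"
      unfolding e using comp_neg[OF q] Phi_bd_low[OF d ab a] by simp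
  qed
  then show ?thesis by simp
qed

lemma Phi_inj:
  assumes y1: "y1 \<in> chsp (mcx X M) n" and y2: "y2 \<in> chsp (mcx X M) n" and eq: "Phi X M n y1 = Phi X M n y2"
  shows "y1 = y2"
proof (rule chsp_eqI)
  show "y1 \<in> chsp X n" "y2 \<in> chsp X n" using y1 y2 chsp_mcx_sub by blast+
  fix a assume a: "a \<in> idx X n"
  show "comp X n a y1 = comp X n a y2"
  proof (cases "a \<in> crit M")
    case True
    then show ?thesis using Phi_crit[OF _ a True] eq \<open>y1 \<in> chsp X n\<close> \<open>y2 \<in> chsp X n\<close> by metis
  next
    case False then show ?thesis using y1 y2 chsp_mcx_iff by simp
  qed
qed

lemma Phi_zero: "Phi X M n 0 = 0"
  using lin_on_0[OF chsp_subspace Phi_lin] .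

lemma mcx_based: "based_complex (mcx X M)"
  unfolding based_complex_def
proof (intro conjI allI ballI impI)
  fix n show "finite (idx (mcx X M) n)" using fin_idx by simp
next
  fix n :: int assume "n < 0" then show "idx (mcx X M) n = {}" using idx_neg by simp
next
  fix n m :: int assume "n \<noteq> m" then show "idx (mcx X M) n \<inter> idx (mcx X M) m = {}" using idx_disj by auto
next
  fix n a assume "a \<in> idx (mcx X M) n" then show "\<exists>B. finite B \<and> cell (mcx X M) a = span B" using cell_span[of a n] by simp
next
  fix n :: int and f a
  assume h: "(\<forall>a\<in>idx (mcx X M) n. f a \<in> cell (mcx X M) a) \<and> (\<Sum>a\<in>idx (mcx X M) n. f a) = 0"
    and a: "a \<in> idx (mcx X M) n"
  have S: "idx X n \<inter> crit M \<subseteq> idx X n" by blast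
  have F: "\<And>b. b \<in> idx X n \<inter> crit M \<Longrightarrow> f b \<in> cell X b" using h by simp
  have "comp X n a (\<Sum>b\<in>idx X n \<inter> crit M. f b) = f a" using sum_cells(2)[OF S F, of a] a by simp
  then show "f a = 0" using h comp_zero by simp
next
  fix n x y assume x: "x \<in> chsp (mcx X M) n" and y: "y \<in> chsp (mcx X M) n"
  show "bd (mcx X M) n (x + y) = bd (mcx X M) n x + bd (mcx X M) n y"
    using lin_on_add[OF bdm_lin] chsp_mcx_sub x y by blast
next
  fix n x c assume x: "x \<in> chsp (mcx X M) n"
  show "bd (mcx X M) n (c *\<^sub>R x) = c *\<^sub>R bd (mcx X M) n x"
    using lin_on_scale[OF bdm_lin] chsp_mcx_sub x by blast
next
  fix n x assume x: "x \<in> chsp (mcx X M) n"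
  show "bd (mcx X M) n x \<in> chsp (mcx X M) (n - 1)" using bdm_mcx chsp_mcx_sub x by blast
next
  fix n x assume x: "x \<in> chsp (mcx X M) n"
  let ?d1 = "bd (mcx X M) n x"
  let ?d2 = "bd (mcx X M) (n - 1) ?d1"
  have d1: "?d1 \<in> chsp (mcx X M) (n - 1)" using bdm_mcx chsp_mcx_sub x by blast
  have d2: "?d2 \<in> chsp (mcx X M) (n - 1 - 1)" using bdm_mcx chsp_mcx_sub d1 by blast
  have "Phi X M (n - 1 - 1) ?d2 = bd X (n - 1) (Phi X M (n - 1) ?d1)" using Phi_chain[OF d1] by simp
  also have "\<dots> = bd X (n - 1) (bd X n (Phi X M n x))" using Phi_chain[OF x] by simp
  also have "\<dots> = 0" using bd_bd Phi_chsp chsp_mcx_sub x by blast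
  finally have e: "Phi X M (n - 1 - 1) ?d2 = Phi X M (n - 1 - 1) 0" using Phi_zero by simp
  have z: "0 \<in> chsp (mcx X M) (n - 1 - 1)" using chsp_mcx_iff chsp_0 comp_zero by simp
  show "?d2 = 0" by (rule Phi_inj[OF d2 z e])
qed


lemma free_lower:
  assumes nf: "\<And>a b. (a, b) \<in> M \<Longrightarrow> a \<notin> idx X n" and \<alpha>: "\<alpha> \<in> idx X (n - 1)"
  shows "\<not> (\<exists>a. (a, \<alpha>) \<in> M)"
proof
  assume "\<exists>a. (a, \<alpha>) \<in> M"
  then obtain a where a\<alpha>: "(a, \<alpha>) \<in> M" by blast
  have "deg X a - 1 = n - 1" using M_deg[OF a\<alpha>] \<alpha> idx_disj by blast
  then have "a \<in> idx X n" using M_deg[OF a\<alpha>] by simp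
  then show False using nf a\<alpha> by blast
qed

lemma free_A:
  assumes nf: "\<And>a b. (a, b) \<in> M \<Longrightarrow> a \<notin> idx X n"
    and z: "z \<in> chsp X (n - 1)" and zc: "bd X (n - 1) z = 0"
  shows "Phi X M (n - 1) (Psi X M (n - 1) z) = z"
proof -
  let ?p = "Psi X M (n - 1) z"
  have p: "?p \<in> chsp X (n - 1)" using Psi_props(1)[OF z] .
  have pc: "comp X (n - 1) c ?p = comp X (n - 1) c z" if c: "c \<in> idx X (n - 1)" "c \<in> crit M" for c
  proof -
    have "comp X (n - 1) c ?p = ps (n - 1) z c" using Psi_props(2)[OF z, of c] c by simp
    also have "\<dots> = Gamma X M c c (comp X (n - 1) c z) + (\<Sum>a\<in>idx X (n - 1) - {c}. Gamma X M c a (comp X (n - 1) a z))"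
      by (rule sum.remove[OF fin_idx c(1)])
    also have "(\<Sum>a\<in>idx X (n - 1) - {c}. Gamma X M c a (comp X (n - 1) a z)) = 0"
    proof (rule sum.neutral, rule ballI)
      fix a assume a: "a \<in> idx X (n - 1) - {c}"
      have "hb a = n - 1" using hb_unmatched_low[OF free_lower[OF nf]] a deg_eq by auto
      then have "hb a \<le> n - 1" by simp
      moreover have "\<not> (\<exists>b. (c, b) \<in> M)" using c crit_iff by blast
      ultimately show "Gamma X M c a (comp X (n - 1) a z) = 0" using G0 c a by blast
    qed
    finally show ?thesis using Gamma_self by simp
  qed
  let ?w = "Phi X M (n - 1) ?p - z"
  have pp: "Phi X M (n - 1) ?p \<in> chsp X (n - 1)" using Phi_chsp p by blast
  have w: "?w \<in> chsp X (n - 1)" using chsp_diff pp z by blast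
  have "?w = 0"
  proof (rule UL[OF w])
    fix c assume c: "c \<in> idx X (n - 1)" and nu: "\<not> (\<exists>b. (c, b) \<in> M)"
    have nl: "\<not> (\<exists>a. (a, c) \<in> M)" by (rule free_lower[OF nf c])
    have cc: "c \<in> crit M" unfolding crit_iff using nu nl by blast
    show "comp X (n - 1) c ?w = 0"
      using comp_diff[OF pp z] Phi_crit[OF p c cc] pc[OF c cc] by simp
  next
    fix a b assume ab: "(a, b) \<in> M" and a: "a \<in> idx X (n - 1)"
    have "bd X (n - 1) ?w = bd X (n - 1) (Phi X M (n - 1) ?p)" using bd_diff[OF pp z] zc by simp
    then show "comp X (n - 1 - 1) b (bd X (n - 1) ?w) = 0" using Phi_bd_low[OF p ab a] by simp
  qed
  then show ?thesis by simp
qed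

lemma Phi_id_free:
  assumes nf: "\<And>a b. (a, b) \<in> M \<Longrightarrow> a \<notin> idx X n" and y: "y \<in> chsp (mcx X M) n"
  shows "Phi X M n y = y"
proof (rule chsp_eqI)
  have y': "y \<in> chsp X n" using chsp_mcx_sub[OF y] .
  show "Phi X M n y \<in> chsp X n" using Phi_chsp[OF y'] .
  show "y \<in> chsp X n" using y' .
  fix a assume a: "a \<in> idx X n"
  show "comp X n a (Phi X M n y) = comp X n a y"
  proof (cases "a \<in> crit M")
    case True then show ?thesis using Phi_crit[OF y' a] by simp
  next
    case False
    from False obtain b where "(a, b) \<in> M \<or> (b, a) \<in> M" unfolding crit_iff by blast
    then have ba: "(b, a) \<in> M" using nf a by blast
    have "comp X n a y = 0" using False y chsp_mcx_iff by blast
    then show ?thesis using Phi_low[OF y' ba] by simp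
  qed
qed

abbreviation psc where "psc n \<alpha> v \<equiv> (\<Sum>\<beta>\<in>idx X n \<inter> crit M. Gamma X M \<beta> \<alpha> v)"

lemma psc_0: "psc n \<alpha> 0 = 0"
  using Gamma_0 by simp

lemma free_B_cell:
  assumes nf: "\<And>a b. (a, b) \<in> M \<Longrightarrow> a \<notin> idx X n"
  shows "\<alpha> \<in> idx X n \<longrightarrow> (\<forall>v\<in>cell X \<alpha>. psc n \<alpha> v - v \<in> bd X (n + 1) ` chsp X (n + 1))"
proof (induction \<alpha> rule: measure_induct_rule[where f="\<lambda>a. card (above n a)"])
  case (less \<alpha>)
  let ?B = "bd X (n + 1) ` chsp X (n + 1)"
  have Bs: "subspace ?B" by (rule bd_img_sub)
  show ?case
  proof (intro impI ballI)
    assume \<alpha>: "\<alpha> \<in> idx X n"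
    fix v assume v: "v \<in> cell X \<alpha>"
    show "psc n \<alpha> v - v \<in> ?B"
    proof (cases "\<alpha> \<in> crit M")
      case True
      have "psc n \<alpha> v = Gamma X M \<alpha> \<alpha> v + (\<Sum>\<beta>\<in>idx X n \<inter> crit M - {\<alpha>}. Gamma X M \<beta> \<alpha> v)"
        by (rule sum.remove) (use fin_idx \<alpha> True in auto)
      also have "(\<Sum>\<beta>\<in>idx X n \<inter> crit M - {\<alpha>}. Gamma X M \<beta> \<alpha> v) = 0"
      proof (rule sum.neutral, rule ballI)
        fix \<beta> assume \<beta>: "\<beta> \<in> idx X n \<inter> crit M - {\<alpha>}"
        have "hb \<alpha> = n" using crit_hb \<alpha> True by blast
        then have "hb \<alpha> \<le> n" by simp
        moreover have "\<not> (\<exists>b. (\<beta>, b) \<in> M)" using \<beta> crit_iff by blast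
        ultimately show "Gamma X M \<beta> \<alpha> v = 0" using G0 \<beta> by blast
      qed
      finally show ?thesis using Gamma_self subspace_0[OF Bs] by simp
    next
      case False
      from False obtain b where "(\<alpha>, b) \<in> M \<or> (b, \<alpha>) \<in> M" unfolding crit_iff by blast
      then obtain a' where a'\<alpha>: "(a', \<alpha>) \<in> M" using nf \<alpha> by blast
      have "deg X a' - 1 = n" using M_deg[OF a'\<alpha>] \<alpha> idx_disj by blast
      then have a': "a' \<in> idx X (n + 1)" using M_deg[OF a'\<alpha>] by (simp add: algebra_simps)
      have \<alpha>': "\<alpha> \<in> idx X (n + 1 - 1)" using \<alpha> by simp
      define g where "g = inv_into (cell X a') (dent X \<alpha> a') v"
      have g: "g \<in> cell X a'" unfolding g_def by (rule inv_in[OF a'\<alpha> v])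
      have dg: "dent X \<alpha> a' g = v" unfolding g_def by (rule dent_inv[OF a'\<alpha> v])
      define u where "u = (\<lambda>\<delta>. dent X \<delta> a' g)"
      have u: "u \<delta> \<in> cell X \<delta>" if \<delta>: "\<delta> \<in> idx X n" for \<delta>
      proof -
        have "\<delta> \<in> idx X (n + 1 - 1)" using \<delta> by simp
        then show ?thesis unfolding u_def by (rule lin_on_in[OF dent_lin[OF a'] g])
      qed
      have ga: "subspace (cell X a')" using cell_sub[OF a'] .
      have step1: "Gamma X M \<beta> \<alpha> v = Gamma X M \<beta> a' (- g)" if \<beta>: "\<beta> \<in> idx X n \<inter> crit M" for \<beta>
      proof -
        have ne: "\<beta> \<noteq> \<alpha>" using \<beta> False by blast
        have "Gamma X M \<beta> \<alpha> v = (\<Sum>c\<in>Succ \<alpha>. Gamma X M \<beta> c (stepmap X M \<alpha> c v))"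
          by (rule Gamma_FS[OF ne])
        also have "\<dots> = Gamma X M \<beta> a' (stepmap X M \<alpha> a' v) + (\<Sum>c\<in>Succ \<alpha> - {a'}. Gamma X M \<beta> c (stepmap X M \<alpha> c v))"
          by (rule sum.remove[OF Succ_finite]) (use r_up[OF a'\<alpha>] in \<open>simp add: Succ_def\<close>)
        also have "(\<Sum>c\<in>Succ \<alpha> - {a'}. Gamma X M \<beta> c (stepmap X M \<alpha> c v)) = 0"
        proof (rule sum.neutral, rule ballI)
          fix c assume c: "c \<in> Succ \<alpha> - {a'}"
          then have \<alpha>c: "(\<alpha>, c) \<in> r" unfolding Succ_def by simp
          from r_deg[OF \<alpha>c] have "deg X c = deg X \<alpha> - 1 \<or> (c, \<alpha>) \<in> M" by blast
          then show "Gamma X M \<beta> c (stepmap X M \<alpha> c v) = 0"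
          proof
            assume dc: "deg X c = deg X \<alpha> - 1"
            have "deg X \<alpha> = n" using deg_eq \<alpha> by blast
            then have "hb c \<le> n" using hb_le[of c] dc by simp
            moreover have "\<not> (\<exists>b. (\<beta>, b) \<in> M)" using \<beta> crit_iff by blast
            moreover have "\<beta> \<noteq> c"
            proof
              assume "\<beta> = c" then have "deg X c = n" using \<beta> deg_eq by blast
              then show False using dc \<open>deg X \<alpha> = n\<close> by simp
            qed
            ultimately show ?thesis using G0 \<beta> by blast
          next
            assume "(c, \<alpha>) \<in> M" then have "c = a'" using M_snd a'\<alpha> by blast
            then show ?thesis using c by simp
          qed
        qed
        finally show ?thesis using a'\<alpha> unfolding stepmap_def g_def by simp
      qed
      have step2: "Gamma X M \<beta> a' (- g) = - (\<Sum>\<delta>\<in>idx X n - {\<alpha>}. Gamma X M \<beta> \<delta> (u \<delta>))" if \<beta>: "\<beta> \<in> idx X n \<inter> crit M" for \<beta>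
      proof -
        have ne: "\<beta> \<noteq> a'"
        proof
          assume "\<beta> = a'" then have "n = n + 1" using \<beta> a' idx_disj by blast
          then show False by simp
        qed
        have SS: "Succ a' \<subseteq> idx X n - {\<alpha>}"
        proof
          fix c assume "c \<in> Succ a'"
          then have ac: "(a', c) \<in> r" unfolding Succ_def by simp
          from r_deg[OF ac] have "(deg X c = deg X a' - 1 \<and> (a', c) \<notin> M) \<or> (c, a') \<in> M" by blast
          then show "c \<in> idx X n - {\<alpha>}"
          proof
            assume h: "deg X c = deg X a' - 1 \<and> (a', c) \<notin> M"
            have "deg X a' = n + 1" using deg_eq a' by blast
            then have "deg X c = n" using h by simp
            then have "c \<in> idx X n" using r_deg[OF ac] by simp
            moreover have "c \<noteq> \<alpha>" using h a'\<alpha> by blast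
            ultimately show ?thesis by simp
          next
            assume "(c, a') \<in> M" then show ?thesis using M_ul[OF a'\<alpha>] by blast
          qed
        qed
        have "Gamma X M \<beta> a' (- g) = (\<Sum>c\<in>Succ a'. Gamma X M \<beta> c (stepmap X M a' c (- g)))"
          by (rule Gamma_FS[OF ne])
        also have "\<dots> = (\<Sum>c\<in>Succ a'. Gamma X M \<beta> c (dent X c a' (- g)))"
        proof (rule sum.cong[OF refl])
          fix c assume "c \<in> Succ a'"
          have "(c, a') \<notin> M" using M_ul[OF a'\<alpha>] by blast
          then show "Gamma X M \<beta> c (stepmap X M a' c (- g)) = Gamma X M \<beta> c (dent X c a' (- g))"
            unfolding stepmap_def by simp
        qed
        also have "\<dots> = (\<Sum>\<delta>\<in>idx X n - {\<alpha>}. Gamma X M \<beta> \<delta> (dent X \<delta> a' (- g)))"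
        proof (rule sum.mono_neutral_left)
          show "finite (idx X n - {\<alpha>})" using fin_idx by simp
          show "Succ a' \<subseteq> idx X n - {\<alpha>}" by (rule SS)
          show "\<forall>i\<in>idx X n - {\<alpha>} - Succ a'. Gamma X M \<beta> i (dent X i a' (- g)) = 0"
          proof
            fix i assume i: "i \<in> idx X n - {\<alpha>} - Succ a'"
            have "(a', i) \<notin> M" using M_fst a'\<alpha> i by blast
            then have "\<not> edge X a' i" using r_down i unfolding Succ_def by blast
            then have "dent X i a' (- g) = 0" using noedge_dent a' g cell_neg by blast
            then show "Gamma X M \<beta> i (dent X i a' (- g)) = 0" using Gamma_0 by simp
          qed
        qed
        also have "\<dots> = (\<Sum>\<delta>\<in>idx X n - {\<alpha>}. - Gamma X M \<beta> \<delta> (u \<delta>))"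
        proof (rule sum.cong[OF refl])
          fix \<delta> assume \<delta>: "\<delta> \<in> idx X n - {\<alpha>}"
          have \<delta>': "\<delta> \<in> idx X (n + 1 - 1)" using \<delta> by simp
          have "dent X \<delta> a' (- g) = - u \<delta>" unfolding u_def by (rule lin_on_neg[OF ga dent_lin[OF a' \<delta>'] g])
          moreover have "Gamma X M \<beta> \<delta> (- u \<delta>) = - Gamma X M \<beta> \<delta> (u \<delta>)"
            by (rule lin_on_neg[OF cell_sub Gamma_lin u]) (use \<delta> \<beta> in auto)
          ultimately show "Gamma X M \<beta> \<delta> (dent X \<delta> a' (- g)) = - Gamma X M \<beta> \<delta> (u \<delta>)" by simp
        qed
        finally show ?thesis by (simp add: sum_negf)
      qed
      have psv: "psc n \<alpha> v = - (\<Sum>\<delta>\<in>idx X n - {\<alpha>}. psc n \<delta> (u \<delta>))"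
      proof -
        have "psc n \<alpha> v = (\<Sum>\<beta>\<in>idx X n \<inter> crit M. - (\<Sum>\<delta>\<in>idx X n - {\<alpha>}. Gamma X M \<beta> \<delta> (u \<delta>)))"
          by (rule sum.cong[OF refl]) (simp add: step1 step2)
        also have "\<dots> = - (\<Sum>\<beta>\<in>idx X n \<inter> crit M. \<Sum>\<delta>\<in>idx X n - {\<alpha>}. Gamma X M \<beta> \<delta> (u \<delta>))"
          by (simp only: sum_negf)
        also have "(\<Sum>\<beta>\<in>idx X n \<inter> crit M. \<Sum>\<delta>\<in>idx X n - {\<alpha>}. Gamma X M \<beta> \<delta> (u \<delta>)) = (\<Sum>\<delta>\<in>idx X n - {\<alpha>}. psc n \<delta> (u \<delta>))"
          by (rule sum.swap)
        finally show ?thesis .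
      qed
      have bdg: "bd X (n + 1) g = v + (\<Sum>\<delta>\<in>idx X n - {\<alpha>}. u \<delta>)"
      proof -
        have gc: "g \<in> chsp X (n + 1)" using cell_chsp[OF a' g] .
        have bc: "bd X (n + 1) g \<in> chsp X n" using bd_chsp[OF gc] by simp
        have "bd X (n + 1) g = (\<Sum>\<delta>\<in>idx X n. comp X n \<delta> (bd X (n + 1) g))" using decomp[OF bc] .
        also have "\<dots> = (\<Sum>\<delta>\<in>idx X n. u \<delta>)"
        proof (rule sum.cong[OF refl])
          fix \<delta> show "comp X n \<delta> (bd X (n + 1) g) = u \<delta>"
            unfolding u_def dent_def using deg_eq[OF a'] by simp
        qed
        also have "\<dots> = u \<alpha> + (\<Sum>\<delta>\<in>idx X n - {\<alpha>}. u \<delta>)" by (rule sum.remove[OF fin_idx \<alpha>])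
        finally show ?thesis using dg unfolding u_def by simp
      qed
      have each: "psc n \<delta> (u \<delta>) - u \<delta> \<in> ?B" if \<delta>: "\<delta> \<in> idx X n - {\<alpha>}" for \<delta>
      proof (cases "edge X a' \<delta>")
        case False
        then have "u \<delta> = 0" unfolding u_def using noedge_dent a' g by blast
        then show ?thesis using psc_0 subspace_0[OF Bs] by simp
      next
        case True
        have "(a', \<delta>) \<notin> M" using M_fst a'\<alpha> \<delta> by blast
        then have "(a', \<delta>) \<in> r" using r_down True by blast
        moreover have "(\<alpha>, a') \<in> r" using r_up[OF a'\<alpha>] .
        ultimately have "(\<alpha>, \<delta>) \<in> r\<^sup>+" by simp
        moreover have \<delta>n: "\<delta> \<in> idx X n" using \<delta> by simp
        ultimately have "card (above n \<delta>) < card (above n \<alpha>)" by (rule above_less)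
        then have "\<delta> \<in> idx X n \<longrightarrow> (\<forall>v\<in>cell X \<delta>. psc n \<delta> v - v \<in> ?B)" by (rule less)
        then have h: "\<forall>v\<in>cell X \<delta>. psc n \<delta> v - v \<in> ?B" using \<delta>n by (rule mp)
        show ?thesis by (rule bspec[OF h u[OF \<delta>n]])
      qed
      have sd: "(\<Sum>\<delta>\<in>idx X n - {\<alpha>}. psc n \<delta> (u \<delta>) - u \<delta>) = (\<Sum>\<delta>\<in>idx X n - {\<alpha>}. psc n \<delta> (u \<delta>)) - (\<Sum>\<delta>\<in>idx X n - {\<alpha>}. u \<delta>)"
        by (rule sum_subtractf)
      have eq: "psc n \<alpha> v - v = - bd X (n + 1) g - (\<Sum>\<delta>\<in>idx X n - {\<alpha>}. psc n \<delta> (u \<delta>) - u \<delta>)"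
      proof -
        have gen: "\<And>(P::'v) U b. b = v + U \<Longrightarrow> - P - v = - b - (P - U)" by (simp add: algebra_simps)
        show ?thesis unfolding sd psv by (rule gen[OF bdg])
      qed
      have bgB: "bd X (n + 1) g \<in> ?B" by (rule imageI[OF cell_chsp[OF a' g]])
      have SB: "(\<Sum>\<delta>\<in>idx X n - {\<alpha>}. psc n \<delta> (u \<delta>) - u \<delta>) \<in> ?B"
        by (rule subspace_sum[OF Bs]) (rule each)
      have "- bd X (n + 1) g - (\<Sum>\<delta>\<in>idx X n - {\<alpha>}. psc n \<delta> (u \<delta>) - u \<delta>) \<in> ?B"
        by (rule subspace_diff[OF Bs subspace_neg[OF Bs bgB] SB])
      then show ?thesis unfolding eq .
    qed
  qed
qed

lemma free_B:
  assumes nf: "\<And>a b. (a, b) \<in> M \<Longrightarrow> a \<notin> idx X n" and s: "s \<in> chsp X n"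
  shows "Phi X M n (Psi X M n s) - s \<in> bd X (n + 1) ` chsp X (n + 1)"
proof -
  let ?B = "bd X (n + 1) ` chsp X (n + 1)"
  have Bs: "subspace ?B" by (rule bd_img_sub)
  have "Phi X M n (Psi X M n s) = Psi X M n s" using Phi_id_free[OF nf Psi_mcx[OF s]] .
  also have "Psi X M n s = (\<Sum>\<alpha>\<in>idx X n. psc n \<alpha> (comp X n \<alpha> s))" unfolding Psi_def ..
  finally have e: "Phi X M n (Psi X M n s) - s = (\<Sum>\<alpha>\<in>idx X n. psc n \<alpha> (comp X n \<alpha> s) - comp X n \<alpha> s)"
    using decomp[OF s] by (simp add: sum_subtractf)
  show ?thesis unfolding e
  proof (rule subspace_sum[OF Bs])
    fix \<alpha> assume \<alpha>: "\<alpha> \<in> idx X n"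
    have "\<alpha> \<in> idx X n \<longrightarrow> (\<forall>v\<in>cell X \<alpha>. psc n \<alpha> v - v \<in> bd X (n + 1) ` chsp X (n + 1))"
      by (rule free_B_cell[OF nf])
    then show "psc n \<alpha> (comp X n \<alpha> s) - comp X n \<alpha> s \<in> bd X (n + 1) ` chsp X (n + 1)"
      using \<alpha> comp_cell[OF s \<alpha>] by blast
  qed
qed

lemma nonfree_witness:
  assumes ab: "(a, b) \<in> M" and a: "a \<in> idx X n"
  shows "\<exists>x\<in>cell X a. comp X (n - 1) b (bd X n x) \<noteq> 0"
proof -
  obtain m where "a \<in> idx X m" "b \<in> idx X (m - 1)" "\<exists>x\<in>cell X a. dent X b a x \<noteq> 0"
    using M_edge[OF ab] unfolding edge_def by blast
  moreover have "deg X a = n" using deg_eq a by blast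
  ultimately show ?thesis unfolding dent_def by auto
qed

end



lemma GS_aux:
  fixes S :: "'v::real_inner set"
  assumes "finite T" "finite S" "pairwise orthogonal S"
  shows "\<exists>U. finite U \<and> pairwise orthogonal (S \<union> U) \<and> span (S \<union> U) = span (S \<union> T)"
  using assms
proof (induction arbitrary: S)
  case empty then show ?case by (intro exI[of _ "{}"]) simp
next
  case (insert a T)
  have 0: "\<And>x y. \<lbrakk>x \<noteq> y; x \<in> S; y \<in> S\<rbrakk> \<Longrightarrow> x \<bullet> y = 0"
    using insert by (simp add: pairwise_def orthogonal_def)
  define a' where "a' = a - (\<Sum>b\<in>S. (b \<bullet> a / (b \<bullet> b)) *\<^sub>R b)"
  have orthS: "\<And>x. x \<in> S \<Longrightarrow> a' \<bullet> x = 0"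
  proof -
    fix x assume x: "x \<in> S"
    have "a \<bullet> x = (\<Sum>y\<in>S. if y = x then y \<bullet> a else 0)"
      using insert.prems(1) x by (simp add: inner_commute)
    also have "\<dots> = (\<Sum>b\<in>S. b \<bullet> a * (b \<bullet> x) / (b \<bullet> b))"
    proof (rule sum.cong[OF refl])
      fix b assume b: "b \<in> S"
      show "(if b = x then b \<bullet> a else 0) = b \<bullet> a * (b \<bullet> x) / (b \<bullet> b)"
      proof (cases "b = x")
        case True
        then show ?thesis by (cases "b \<bullet> b = 0") auto
      next
        case False then show ?thesis using 0 b x by simp
      qed
    qed
    finally show "a' \<bullet> x = 0"
      unfolding a'_def by (simp add: algebra_simps inner_sum_left)
  qed
  have po: "pairwise orthogonal (insert a' S)"
    by (rule pairwise_orthogonal_insert[OF insert.prems(2)]) (simp add: orthogonal_def orthS)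
  obtain U where U: "finite U" "pairwise orthogonal (insert a' S \<union> U)"
    "span (insert a' S \<union> U) = span (insert a' S \<union> T)"
    using insert.IH[of "insert a' S"] insert.prems(1) po by auto
  have "span (S \<union> insert a' U) = span (insert a' S \<union> U)" by (simp add: insert_commute)
  also have "\<dots> = span (insert a' (S \<union> T))" using U(3) by simp
  also have "\<dots> = span (insert a (S \<union> T))"
    by (simp add: a'_def span_neg span_sum span_base span_mul eq_span_insert_eq)
  also have "\<dots> = span (S \<union> insert a T)" by simp
  finally show ?case using U(1,2)
    by (intro exI[of _ "insert a' U"]) (simp add: insert_commute)
qed

lemma fin_orth_basis:
  fixes S :: "'v::real_inner set"
  assumes S: "subspace S" and T: "finite T" and ST: "S \<subseteq> span T"
  shows "\<exists>U. finite U \<and> pairwise orthogonal U \<and> 0 \<notin> U \<and> span U = S"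
proof -
  obtain B where B: "B \<subseteq> S" "independent B" "S \<subseteq> span B"
    by (rule maximal_independent_subset[of S])
  have fB: "finite B" using independent_span_bound[OF T B(2)] B(1) ST by blast
  have sB: "span B = S" using B S span_minimal by (metis span_subspace)
  obtain U where U: "finite U" "pairwise orthogonal ({} \<union> U)" "span ({} \<union> U) = span ({} \<union> B)"
    using GS_aux[OF fB, of "{}"] by auto
  have "pairwise orthogonal (U - {0})" using U(2) by (simp add: pairwise_def)
  moreover have "span (U - {0}) = S" using U(3) sB by (simp add: span_delete_0)
  ultimately show ?thesis using U(1) by (intro exI[of _ "U - {0}"]) auto
qed

definition fdim :: "'v::real_inner set \<Rightarrow> bool" where
  "fdim S \<longleftrightarrow> subspace S \<and> (\<exists>T. finite T \<and> S \<subseteq> span T)"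

lemma proj_exists:
  fixes S :: "'v::real_inner set"
  assumes "fdim S"
  shows "\<exists>p\<in>S. \<forall>u\<in>S. inner (x - p) u = 0"
proof -
  obtain U where U: "finite U" "pairwise orthogonal U" "0 \<notin> U" "span U = S"
    using fin_orth_basis assms unfolding fdim_def by blast
  define p where "p = (\<Sum>e\<in>U. (inner x e / inner e e) *\<^sub>R e)"
  have "p \<in> span U" unfolding p_def by (rule span_sum, rule span_mul, rule span_base, assumption)
  then have pS: "p \<in> S" using U(4) by simp
  have orth: "inner (x - p) e = 0" if e: "e \<in> U" for e
  proof -
    have "inner p e = (\<Sum>b\<in>U. (inner x b / inner b b) * inner b e)"
      unfolding p_def by (simp add: inner_sum_left)
    also have "\<dots> = (\<Sum>b\<in>U. if b = e then inner x e else 0)"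
    proof (rule sum.cong[OF refl])
      fix b assume b: "b \<in> U"
      show "inner x b / inner b b * inner b e = (if b = e then inner x e else 0)"
      proof (cases "b = e")
        case True
        have "inner e e \<noteq> 0" using U(3) e by auto
        then show ?thesis using True by simp
      next
        case False
        then have "inner b e = 0" using U(2) b e by (simp add: pairwise_def orthogonal_def)
        then show ?thesis using False by simp
      qed
    qed
    also have "\<dots> = inner x e" using U(1) e by simp
    finally show ?thesis by (simp add: inner_diff_left)
  qed
  have "\<forall>u\<in>span U. inner (x - p) u = 0"
  proof
    fix u assume "u \<in> span U"
    then show "inner (x - p) u = 0"
      using orthogonal_to_span[of u U "x - p"] orth by (simp add: orthogonal_def)
  qed
  then show ?thesis using pS U(4) by blast
qed

lemma proj_eq:
  assumes w: "w \<in> W" and h: "\<forall>u\<in>W. inner (s - w) u = 0"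
  shows "proj W s = w"
  unfolding proj_def
proof (rule the_equality)
  show "w \<in> W \<and> (\<forall>u\<in>W. inner (s - w) u = 0)" using w h by blast
  fix w' assume w': "w' \<in> W \<and> (\<forall>u\<in>W. inner (s - w') u = 0)"
  have a: "inner (w - w') w = 0" using h w' w by (simp add: inner_diff_left)
  have b: "inner (w - w') w' = 0" using h w' w by (simp add: inner_diff_left)
  have "inner (w - w') (w - w') = 0" using a b by (simp add: inner_diff_right)
  then show "w' = w" by simp
qed

lemma proj_zero_orth:
  assumes "fdim W" "proj W s = 0" "u \<in> W"
  shows "inner s u = 0"
proof -
  obtain p where p: "p \<in> W" "\<forall>u\<in>W. inner (s - p) u = 0" using proj_exists assms(1) by blast
  have "proj W s = p" by (rule proj_eq[OF p])
  then have "p = 0" using assms(2) by simp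
  then show ?thesis using p assms(3) by simp
qed

lemma adj_char:
  fixes f :: "'v::real_inner \<Rightarrow> 'w::real_inner"
  assumes V: "fdim V" and f: "lin_on V W f"
  shows "adj V W f y \<in> V \<and> (\<forall>x\<in>V. inner (f x) y = inner x (adj V W f y))"
proof -
  obtain U where U: "finite U" "pairwise orthogonal U" "0 \<notin> U" "span U = V"
    using fin_orth_basis V unfolding fdim_def by blast
  have sub: "subspace V" using V unfolding fdim_def by blast
  define z where "z = (\<Sum>e\<in>U. (inner (f e) y / inner e e) *\<^sub>R e)"
  have "z \<in> span U" unfolding z_def by (rule span_sum, rule span_mul, rule span_base, assumption)
  then have zV: "z \<in> V" using U(4) by simp
  have expand: "x = (\<Sum>e\<in>U. (inner x e / inner e e) *\<^sub>R e)" if x: "x \<in> V" for x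
  proof -
    define p where "p = (\<Sum>e\<in>U. (inner x e / inner e e) *\<^sub>R e)"
    have "p \<in> span U" unfolding p_def by (rule span_sum, rule span_mul, rule span_base, assumption)
    then have pV: "p \<in> V" using U(4) by simp
    have orth: "inner (x - p) e = 0" if e: "e \<in> U" for e
    proof -
      have "inner p e = (\<Sum>b\<in>U. (inner x b / inner b b) * inner b e)"
        unfolding p_def by (simp add: inner_sum_left)
      also have "\<dots> = (\<Sum>b\<in>U. if b = e then inner x e else 0)"
      proof (rule sum.cong[OF refl])
        fix b assume b: "b \<in> U"
        show "inner x b / inner b b * inner b e = (if b = e then inner x e else 0)"
        proof (cases "b = e")
          case True
          have "inner e e \<noteq> 0" using U(3) e by auto
          then show ?thesis using True by simp
        next
          case False
          then have "inner b e = 0" using U(2) b e by (simp add: pairwise_def orthogonal_def)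
          then show ?thesis using False by simp
        qed
      qed
      also have "\<dots> = inner x e" using U(1) e by simp
      finally show ?thesis by (simp add: inner_diff_left)
    qed
    have "x - p \<in> V" using x pV sub subspace_diff by blast
    then have "inner (x - p) (x - p) = 0"
      using orthogonal_to_span[of "x - p" U "x - p"] orth U(4) by (simp add: orthogonal_def)
    then show ?thesis unfolding p_def by simp
  qed
  have zchar: "\<forall>x\<in>V. inner (f x) y = inner x z"
  proof
    fix x assume x: "x \<in> V"
    have eV: "(inner x e / inner e e) *\<^sub>R e \<in> V" if "e \<in> U" for e
    proof -
      have "(inner x e / inner e e) *\<^sub>R e \<in> span U" using that by (rule span_mul[OF span_base])
      then show ?thesis using U(4) by simp
    qed
    have "f x = f (\<Sum>e\<in>U. (inner x e / inner e e) *\<^sub>R e)" by (rule arg_cong[OF expand[OF x]])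
    also have "\<dots> = (\<Sum>e\<in>U. f ((inner x e / inner e e) *\<^sub>R e))"
      by (rule lin_on_sum[OF sub f U(1)]) (rule eV)
    also have "\<dots> = (\<Sum>e\<in>U. (inner x e / inner e e) *\<^sub>R f e)"
    proof (rule sum.cong[OF refl])
      fix e assume "e \<in> U"
      then have "e \<in> V" using U(4) span_base by blast
      then show "f ((inner x e / inner e e) *\<^sub>R e) = (inner x e / inner e e) *\<^sub>R f e" by (rule lin_on_scale[OF f])
    qed
    finally have "inner (f x) y = (\<Sum>e\<in>U. (inner x e / inner e e) * inner (f e) y)"
      by (simp add: inner_sum_left)
    also have "\<dots> = inner x z" unfolding z_def by (simp add: inner_sum_right algebra_simps)
    finally show "inner (f x) y = inner x z" .
  qed
  have "adj V W f y = z"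
    unfolding adj_def
  proof (rule the_equality)
    show "z \<in> V \<and> (\<forall>x\<in>V. inner (f x) y = inner x z)" using zV zchar by blast
    fix z' assume z': "z' \<in> V \<and> (\<forall>x\<in>V. inner (f x) y = inner x z')"
    have "z' - z \<in> V" using z' zV sub subspace_diff by blast
    then have "inner (z' - z) z' = inner (z' - z) z" using z' zchar by simp
    then have "inner (z' - z) (z' - z) = 0" by (simp add: inner_diff_right)
    then show "z' = z" by simp
  qed
  then show ?thesis using zV zchar by simp
qed



context BC
begin

lemma bd_lin: "lin_on (chsp X n) (chsp X (n - 1)) (bd X n)"
  by (rule lin_onI) (simp_all add: bd_chsp bd_add bd_scale)

lemma chsp_span: "\<exists>T. finite T \<and> chsp X n \<subseteq> span T"
proof -
  have "\<forall>a\<in>idx X n. \<exists>B. finite B \<and> cell X a = span B" using cell_span by blast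
  then obtain Bf where Bf: "\<forall>a\<in>idx X n. finite (Bf a) \<and> cell X a = span (Bf a)" by (metis bchoice)
  let ?T = "\<Union>a\<in>idx X n. Bf a"
  have fT: "finite ?T" using Bf fin_idx by blast
  have "chsp X n \<subseteq> span ?T"
  proof
    fix x assume "x \<in> chsp X n"
    then obtain f where f: "\<And>a. a \<in> idx X n \<Longrightarrow> f a \<in> cell X a" "x = (\<Sum>a\<in>idx X n. f a)"
      by (auto elim!: chspE)
    have "\<And>a. a \<in> idx X n \<Longrightarrow> f a \<in> span ?T"
    proof -
      fix a assume a: "a \<in> idx X n"
      then have "f a \<in> span (Bf a)" using f Bf by blast
      moreover have "span (Bf a) \<subseteq> span ?T" using a by (intro span_mono) blast
      ultimately show "f a \<in> span ?T" by blast
    qed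
    then show "x \<in> span ?T" unfolding f(2) by (rule span_sum)
  qed
  then show ?thesis using fT by blast
qed

lemma chsp_fdim: "fdim (chsp X n)"
  unfolding fdim_def using chsp_subspace chsp_span by blast

lemma ker_fdim: "fdim {y \<in> chsp X m. bd X m y = 0}"
  unfolding fdim_def
proof
  show "subspace {y \<in> chsp X m. bd X m y = 0}"
    unfolding subspace_def using chsp_0 chsp_add chsp_scale bd_zero bd_add bd_scale by simp
  obtain T where "finite T" "chsp X m \<subseteq> span T" using chsp_span by blast
  then show "\<exists>T. finite T \<and> {y \<in> chsp X m. bd X m y = 0} \<subseteq> span T" by blast
qed

end

lemma seq_pairs: "seq_morse Y Ms \<Longrightarrow> M' \<in> set Ms \<Longrightarrow> (a, b) \<in> M' \<Longrightarrow> \<exists>k. a \<in> idx Y k \<and> b \<in> idx Y (k - 1)"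
proof (induction Ms arbitrary: Y)
  case Nil then show ?case by simp
next
  case (Cons M Ms)
  show ?case
  proof (cases "M' = M")
    case True
    have mm: "morse_matching Y M" using Cons.prems(1) by simp
    have "\<forall>(a, b)\<in>M. edge Y a b" using mm unfolding morse_matching_def by (elim conjE) assumption
    then have "edge Y a b" using Cons.prems(3) True by blast
    then show ?thesis unfolding edge_def by blast
  next
    case False
    then have "M' \<in> set Ms" using Cons.prems by simp
    then obtain k where "a \<in> idx (mcx Y M) k" "b \<in> idx (mcx Y M) (k - 1)" using Cons by auto
    then show ?thesis by (auto simp: mcx_def)
  qed
qed

context MM
begin

lemma nn_free_mcx:
  assumes sm: "seq_morse (mcx X M) Ms"
  shows "nn_free (mcx X M) Ms n = nn_free X Ms n"
  unfolding nn_free_def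
proof (intro iffI ballI)
  fix M' p assume h: "\<forall>M'\<in>set Ms. \<forall>(a, b)\<in>M'. \<not> (a \<in> idx (mcx X M) n \<and> b \<in> idx (mcx X M) (n - 1))"
    and M': "M' \<in> set Ms" and p: "p \<in> M'"
  obtain a b where ab: "p = (a, b)" by (cases p)
  obtain k where k: "a \<in> idx (mcx X M) k" "b \<in> idx (mcx X M) (k - 1)" using seq_pairs[OF sm M'] p ab by blast
  show "case p of (a, b) \<Rightarrow> \<not> (a \<in> idx X n \<and> b \<in> idx X (n - 1))"
  proof (simp add: ab, intro impI notI)
    assume a: "a \<in> idx X n" and b: "b \<in> idx X (n - 1)"
    have "k = n" using a k idx_disj by auto
    then show False using h M' p ab k by auto
  qed
next
  fix M' p assume h: "\<forall>M'\<in>set Ms. \<forall>(a, b)\<in>M'. \<not> (a \<in> idx X n \<and> b \<in> idx X (n - 1))"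
    and M': "M' \<in> set Ms" and p: "p \<in> M'"
  then show "case p of (a, b) \<Rightarrow> \<not> (a \<in> idx (mcx X M) n \<and> b \<in> idx (mcx X M) (n - 1))"
    by (cases p) auto
qed

lemma free_M: "\<forall>(a, b)\<in>M. \<not> (a \<in> idx X n \<and> b \<in> idx X (n - 1)) \<Longrightarrow> (a, b) \<in> M \<Longrightarrow> a \<notin> idx X n"
proof
  assume h: "\<forall>(a, b)\<in>M. \<not> (a \<in> idx X n \<and> b \<in> idx X (n - 1))" and ab: "(a, b) \<in> M" and a: "a \<in> idx X n"
  have "b \<in> idx X (n - 1)" using M_deg[OF ab] deg_eq[OF a] by simp
  then show False using h ab a by blast
qed

lemma Psi_lin_mcx: "lin_on (chsp X n) (chsp (mcx X M) n) (Psi X M n)"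
  using Psi_lin Psi_mcx unfolding lin_on_def by blast

lemma Phi_lin_mcx: "lin_on (chsp (mcx X M) n) (chsp X n) (Phi X M n)"
  using Phi_lin chsp_mcx_sub unfolding lin_on_def by blast

end

definition seqP :: "('a, 'v::real_inner) bcx \<Rightarrow> ('a \<times> 'a) set list \<Rightarrow> bool" where
 "seqP X Ms \<longleftrightarrow> based_complex (seq_cx X Ms) \<and>
   (\<forall>n. lin_on (chsp (seq_cx X Ms) n) (chsp X n) (seq_Phi X Ms n)) \<and>
   (\<forall>n. lin_on (chsp X n) (chsp (seq_cx X Ms) n) (seq_Psi X Ms n)) \<and>
   (\<forall>n y. y \<in> chsp (seq_cx X Ms) n \<longrightarrow> bd X n (seq_Phi X Ms n y) = seq_Phi X Ms (n - 1) (bd (seq_cx X Ms) n y)) \<and>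
   (\<forall>n y1 y2. y1 \<in> chsp (seq_cx X Ms) n \<longrightarrow> y2 \<in> chsp (seq_cx X Ms) n \<longrightarrow> seq_Phi X Ms n y1 = seq_Phi X Ms n y2 \<longrightarrow> y1 = y2) \<and>
   (\<forall>n z. nn_free X Ms n \<longrightarrow> z \<in> chsp X (n - 1) \<longrightarrow> bd X (n - 1) z = 0 \<longrightarrow> seq_Phi X Ms (n - 1) (seq_Psi X Ms (n - 1) z) = z) \<and>
   (\<forall>n s. nn_free X Ms n \<longrightarrow> s \<in> chsp X n \<longrightarrow> seq_Phi X Ms n (seq_Psi X Ms n s) - s \<in> bd X (n + 1) ` chsp X (n + 1)) \<and>
   (\<forall>n. \<not> nn_free X Ms n \<longrightarrow> (\<exists>z\<in>chsp X (n - 1). bd X (n - 1) z = 0 \<and> z \<notin> seq_Phi X Ms (n - 1) ` chsp (seq_cx X Ms) (n - 1)))"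

lemma seq_main: "based_complex X \<Longrightarrow> seq_morse X Ms \<Longrightarrow> seqP X Ms"
proof (induction Ms arbitrary: X)
  case Nil
  interpret BC X by (unfold_locales) (rule Nil.prems(1))
  show ?case unfolding seqP_def
  proof (intro conjI allI impI)
    show "based_complex (seq_cx X [])" using Nil.prems(1) by simp
  next
    fix n show "lin_on (chsp (seq_cx X []) n) (chsp X n) (seq_Phi X [] n)" by (simp add: lin_on_def)
  next
    fix n show "lin_on (chsp X n) (chsp (seq_cx X []) n) (seq_Psi X [] n)" by (simp add: lin_on_def)
  next
    fix n s assume "s \<in> chsp X n"
    have "bd X (n + 1) 0 \<in> bd X (n + 1) ` chsp X (n + 1)" using chsp_0 by (rule imageI)
    then show "seq_Phi X [] n (seq_Psi X [] n s) - s \<in> bd X (n + 1) ` chsp X (n + 1)" by (simp add: bd_zero)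
  next
    fix n assume "\<not> nn_free X [] n" then show "\<exists>z\<in>chsp X (n - 1). bd X (n - 1) z = 0 \<and> z \<notin> seq_Phi X [] (n - 1) ` chsp (seq_cx X []) (n - 1)"
      by (simp add: nn_free_def)
  qed simp_all
next
  case (Cons M Ms)
  have bcX: "based_complex X" using Cons.prems(1) .
  have mmM: "morse_matching X M" using Cons.prems(2) by simp
  have smY: "seq_morse (mcx X M) Ms" using Cons.prems(2) by simp
  interpret MM X M by (unfold_locales) (rule bcX, rule mmM)
  let ?Y = "mcx X M"
  let ?Z = "seq_cx ?Y Ms"
  let ?F = "seq_Phi ?Y Ms"
  let ?G = "seq_Psi ?Y Ms"
  have IH: "seqP ?Y Ms" using Cons.IH[OF mcx_based smY] .
  have I1: "based_complex ?Z" using IH unfolding seqP_def by (elim conjE) assumption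
  have I2: "\<forall>n. lin_on (chsp ?Z n) (chsp ?Y n) (?F n)" using IH unfolding seqP_def by (elim conjE) assumption
  have I3: "\<forall>n. lin_on (chsp ?Y n) (chsp ?Z n) (?G n)" using IH unfolding seqP_def by (elim conjE) assumption
  have I4: "\<forall>n y. y \<in> chsp ?Z n \<longrightarrow> bd ?Y n (?F n y) = ?F (n - 1) (bd ?Z n y)"
    using IH unfolding seqP_def by (elim conjE) assumption
  have I5: "\<forall>n y1 y2. y1 \<in> chsp ?Z n \<longrightarrow> y2 \<in> chsp ?Z n \<longrightarrow> ?F n y1 = ?F n y2 \<longrightarrow> y1 = y2"
    using IH unfolding seqP_def by (elim conjE) assumption
  have I6: "\<forall>n z. nn_free ?Y Ms n \<longrightarrow> z \<in> chsp ?Y (n - 1) \<longrightarrow> bd ?Y (n - 1) z = 0 \<longrightarrow> ?F (n - 1) (?G (n - 1) z) = z"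
    using IH unfolding seqP_def by (elim conjE) assumption
  have I7: "\<forall>n s. nn_free ?Y Ms n \<longrightarrow> s \<in> chsp ?Y n \<longrightarrow> ?F n (?G n s) - s \<in> bd ?Y (n + 1) ` chsp ?Y (n + 1)"
    using IH unfolding seqP_def by (elim conjE) assumption
  have I8: "\<forall>n. \<not> nn_free ?Y Ms n \<longrightarrow> (\<exists>z\<in>chsp ?Y (n - 1). bd ?Y (n - 1) z = 0 \<and> z \<notin> ?F (n - 1) ` chsp ?Z (n - 1))"
    using IH unfolding seqP_def by (elim conjE) assumption
  have eZ: "seq_cx X (M # Ms) = ?Z" by simp
  have eF: "\<And>n. seq_Phi X (M # Ms) n = Phi X M n \<circ> ?F n" by simp
  have eG: "\<And>n. seq_Psi X (M # Ms) n = ?G n \<circ> Psi X M n" by simp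
  have Fin: "\<And>n y. y \<in> chsp ?Z n \<Longrightarrow> ?F n y \<in> chsp ?Y n" using I2 lin_on_in by blast
  have Gin: "\<And>n s. s \<in> chsp ?Y n \<Longrightarrow> ?G n s \<in> chsp ?Z n" using I3 lin_on_in by blast
  have nfc: "\<And>n. nn_free X (M # Ms) n \<longleftrightarrow> (\<forall>(a, b)\<in>M. \<not> (a \<in> idx X n \<and> b \<in> idx X (n - 1))) \<and> nn_free ?Y Ms n"
    using nn_free_mcx[OF smY] unfolding nn_free_def by auto
  show ?case unfolding seqP_def eZ eF eG
  proof (intro conjI allI impI)
    show "based_complex ?Z" by (rule I1)
  next
    fix n show "lin_on (chsp ?Z n) (chsp X n) (Phi X M n \<circ> ?F n)"
      by (rule lin_on_o[OF I2[rule_format] Phi_lin_mcx])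
  next
    fix n show "lin_on (chsp X n) (chsp ?Z n) (?G n \<circ> Psi X M n)"
      by (rule lin_on_o[OF Psi_lin_mcx I3[rule_format]])
  next
    fix n y assume y: "y \<in> chsp ?Z n"
    have "bd X n (Phi X M n (?F n y)) = Phi X M (n - 1) (bd ?Y n (?F n y))" by (rule Phi_chain[OF Fin[OF y]])
    also have "bd ?Y n (?F n y) = ?F (n - 1) (bd ?Z n y)" using I4 y by blast
    finally show "bd X n ((Phi X M n \<circ> ?F n) y) = (Phi X M (n - 1) \<circ> ?F (n - 1)) (bd ?Z n y)" by simp
  next
    fix n y1 y2 assume y1: "y1 \<in> chsp ?Z n" and y2: "y2 \<in> chsp ?Z n"
      and eq: "(Phi X M n \<circ> ?F n) y1 = (Phi X M n \<circ> ?F n) y2"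
    have "?F n y1 = ?F n y2" using Phi_inj[OF Fin[OF y1] Fin[OF y2]] eq by simp
    then show "y1 = y2" using I5 y1 y2 by blast
  next
    fix n z assume nf: "nn_free X (M # Ms) n" and z: "z \<in> chsp X (n - 1)" and zc: "bd X (n - 1) z = 0"
    have nfM: "\<And>a b. (a, b) \<in> M \<Longrightarrow> a \<notin> idx X n" using nf nfc free_M by blast
    have nfY: "nn_free ?Y Ms n" using nf nfc by blast
    let ?p = "Psi X M (n - 1) z"
    have p: "?p \<in> chsp ?Y (n - 1)" using Psi_mcx[OF z] .
    have pp: "Phi X M (n - 1) ?p = z" by (rule free_A[OF nfM z zc])
    have bp: "bd ?Y (n - 1) ?p \<in> chsp ?Y (n - 1 - 1)" using bdm_mcx chsp_mcx_sub p by blast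
    have "Phi X M (n - 1 - 1) (bd ?Y (n - 1) ?p) = bd X (n - 1) (Phi X M (n - 1) ?p)"
      using Phi_chain[OF p] by simp
    also have "\<dots> = Phi X M (n - 1 - 1) 0" using pp zc Phi_zero by simp
    finally have "bd ?Y (n - 1) ?p = 0"
      using Phi_inj[OF bp] chsp_mcx_iff chsp_0 comp_zero by simp
    then have "?F (n - 1) (?G (n - 1) ?p) = ?p" using I6 nfY p by blast
    then show "(Phi X M (n - 1) \<circ> ?F (n - 1)) ((?G (n - 1) \<circ> Psi X M (n - 1)) z) = z" using pp by simp
  next
    fix n s assume nf: "nn_free X (M # Ms) n" and s: "s \<in> chsp X n"
    have nfM: "\<And>a b. (a, b) \<in> M \<Longrightarrow> a \<notin> idx X n" using nf nfc free_M by blast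
    have nfY: "nn_free ?Y Ms n" using nf nfc by blast
    let ?t = "Psi X M n s"
    let ?B = "bd X (n + 1) ` chsp X (n + 1)"
    have t: "?t \<in> chsp ?Y n" using Psi_mcx[OF s] .
    have "?F n (?G n ?t) - ?t \<in> bd ?Y (n + 1) ` chsp ?Y (n + 1)" using I7 nfY t by blast
    then obtain g' where g': "g' \<in> chsp ?Y (n + 1)" and eg: "?F n (?G n ?t) - ?t = bd ?Y (n + 1) g'" by blast
    have bg: "bd ?Y (n + 1) g' \<in> chsp ?Y n" using bdm_mcx chsp_mcx_sub g' by fastforce
    have e1: "?F n (?G n ?t) = ?t + bd ?Y (n + 1) g'" using eg by (simp add: algebra_simps)
    have "Phi X M n (?t + bd ?Y (n + 1) g') = Phi X M n ?t + Phi X M n (bd ?Y (n + 1) g')"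
      using lin_on_add[OF Phi_lin_mcx t bg] .
    moreover have "Phi X M n (bd ?Y (n + 1) g') = bd X (n + 1) (Phi X M (n + 1) g')"
      using Phi_chain[OF g'] by simp
    ultimately have e2: "Phi X M n (?F n (?G n ?t)) - s = (Phi X M n ?t - s) + bd X (n + 1) (Phi X M (n + 1) g')"
      using e1 by simp
    have A: "Phi X M n ?t - s \<in> ?B" by (rule free_B[OF nfM s])
    have B: "bd X (n + 1) (Phi X M (n + 1) g') \<in> ?B"
      using Phi_chsp[OF chsp_mcx_sub[OF g']] by (rule imageI)
    have "Phi X M n (?F n (?G n ?t)) - s \<in> ?B" unfolding e2 by (rule subspace_add[OF bd_img_sub A B])
    then show "(Phi X M n \<circ> ?F n) ((?G n \<circ> Psi X M n) s) - s \<in> ?B" by simp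
  next
    fix n assume nnf: "\<not> nn_free X (M # Ms) n"
    show "\<exists>z\<in>chsp X (n - 1). bd X (n - 1) z = 0 \<and> z \<notin> (Phi X M (n - 1) \<circ> ?F (n - 1)) ` chsp ?Z (n - 1)"
    proof (cases "nn_free ?Y Ms n")
      case True
      then obtain a b where ab: "(a, b) \<in> M" and a: "a \<in> idx X n" and b: "b \<in> idx X (n - 1)"
        using nnf nfc by blast
      obtain x where x: "x \<in> cell X a" and xb: "comp X (n - 1) b (bd X n x) \<noteq> 0"
        using nonfree_witness[OF ab a] by blast
      have xc: "x \<in> chsp X n" using cell_chsp[OF a x] .
      let ?z = "bd X n x"
      have "?z \<in> chsp X (n - 1)" using bd_chsp[OF xc] .
      moreover have "bd X (n - 1) ?z = 0" using bd_bd[OF xc] .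
      moreover have "?z \<notin> (Phi X M (n - 1) \<circ> ?F (n - 1)) ` chsp ?Z (n - 1)"
      proof
        assume "?z \<in> (Phi X M (n - 1) \<circ> ?F (n - 1)) ` chsp ?Z (n - 1)"
        then obtain y where y: "y \<in> chsp ?Z (n - 1)" and zy: "?z = Phi X M (n - 1) (?F (n - 1) y)" by auto
        have "comp X (n - 1) b (Phi X M (n - 1) (?F (n - 1) y)) = 0"
          by (rule Phi_low[OF chsp_mcx_sub[OF Fin[OF y]] ab])
        then show False using xb zy by simp
      qed
      ultimately show ?thesis by blast
    next
      case False
      then obtain z' where z': "z' \<in> chsp ?Y (n - 1)" and zc: "bd ?Y (n - 1) z' = 0"
        and zn: "z' \<notin> ?F (n - 1) ` chsp ?Z (n - 1)" using I8 by blast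
      let ?z = "Phi X M (n - 1) z'"
      have "?z \<in> chsp X (n - 1)" using Phi_chsp chsp_mcx_sub z' by blast
      moreover have "bd X (n - 1) ?z = 0" using Phi_chain[OF z'] zc Phi_zero by simp
      moreover have "?z \<notin> (Phi X M (n - 1) \<circ> ?F (n - 1)) ` chsp ?Z (n - 1)"
      proof
        assume "?z \<in> (Phi X M (n - 1) \<circ> ?F (n - 1)) ` chsp ?Z (n - 1)"
        then obtain y where y: "y \<in> chsp ?Z (n - 1)" and zy: "?z = Phi X M (n - 1) (?F (n - 1) y)" by auto
        have "z' = ?F (n - 1) y" by (rule Phi_inj[OF z' Fin[OF y] zy])
        then show False using zn y by blast
      qed
      ultimately show ?thesis by blast
    qed
  qed
qed



theorem mainTheorem9:
  fixes X :: "('a, 'v::real_inner) bcx" and Ms :: "('a \<times> 'a) set list" and n :: int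
  assumes "based_complex X" and "seq_morse X Ms"
  shows "((\<forall>s\<in>chsp X n.
             proj {y\<in>chsp X n. adj (chsp X (n + 1)) (chsp X n) (bd X (n + 1)) y = 0}
                  (seq_Phi X Ms n (seq_Psi X Ms n s) - s) = 0) \<and>
          (\<forall>s\<in>chsp X (n - 1).
             proj {y\<in>chsp X (n - 1). bd X (n - 1) y = 0}
                  (adj (chsp X (n - 1)) (chsp (seq_cx X Ms) (n - 1)) (seq_Psi X Ms (n - 1))
                     (adj (chsp (seq_cx X Ms) (n - 1)) (chsp X (n - 1)) (seq_Phi X Ms (n - 1)) s)
                   - s) = 0))
         \<longleftrightarrow> nn_free X Ms n"
proof -
  interpret BC X by unfold_locales (rule assms(1))
  have P: "seqP X Ms" by (rule seq_main[OF assms])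
  let ?C = "seq_cx X Ms"
  let ?F = "seq_Phi X Ms"
  let ?G = "seq_Psi X Ms"
  have Zbc: "based_complex ?C" using P unfolding seqP_def by (elim conjE) assumption
  have Flin: "\<forall>n. lin_on (chsp ?C n) (chsp X n) (?F n)" using P unfolding seqP_def by (elim conjE) assumption
  have Glin: "\<forall>n. lin_on (chsp X n) (chsp ?C n) (?G n)" using P unfolding seqP_def by (elim conjE) assumption
  have SA: "\<forall>n z. nn_free X Ms n \<longrightarrow> z \<in> chsp X (n - 1) \<longrightarrow> bd X (n - 1) z = 0 \<longrightarrow> ?F (n - 1) (?G (n - 1) z) = z"
    using P unfolding seqP_def by (elim conjE) assumption
  have SB: "\<forall>n s. nn_free X Ms n \<longrightarrow> s \<in> chsp X n \<longrightarrow> ?F n (?G n s) - s \<in> bd X (n + 1) ` chsp X (n + 1)"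
    using P unfolding seqP_def by (elim conjE) assumption
  have SC: "\<forall>n. \<not> nn_free X Ms n \<longrightarrow> (\<exists>z\<in>chsp X (n - 1). bd X (n - 1) z = 0 \<and> z \<notin> ?F (n - 1) ` chsp ?C (n - 1))"
    using P unfolding seqP_def by (elim conjE) assumption
  interpret Z: BC ?C by unfold_locales (rule Zbc)
  let ?m = "n - 1"
  define A2 where "A2 = (\<lambda>s. adj (chsp X ?m) (chsp ?C ?m) (?G ?m) (adj (chsp ?C ?m) (chsp X ?m) (?F ?m) s))"
  have FGin: "\<And>u. u \<in> chsp X ?m \<Longrightarrow> ?F ?m (?G ?m u) \<in> chsp X ?m"
    using Flin Glin lin_on_in by metis
  have K: "inner (A2 s) u = inner s (?F ?m (?G ?m u))" if u: "u \<in> chsp X ?m" for s u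
  proof -
    let ?a1 = "adj (chsp ?C ?m) (chsp X ?m) (?F ?m) s"
    have a1: "\<forall>x\<in>chsp ?C ?m. inner (?F ?m x) s = inner x ?a1"
      using adj_char[OF Z.chsp_fdim Flin[rule_format]] by blast
    have a2: "\<forall>x\<in>chsp X ?m. inner (?G ?m x) ?a1 = inner x (A2 s)"
      unfolding A2_def using adj_char[OF chsp_fdim Glin[rule_format]] by blast
    have Gu: "?G ?m u \<in> chsp ?C ?m" using Glin lin_on_in u by blast
    have "inner (A2 s) u = inner u (A2 s)" by (simp add: inner_commute)
    also have "\<dots> = inner (?G ?m u) ?a1" using a2 u by simp
    also have "\<dots> = inner (?F ?m (?G ?m u)) s" using a1 Gu by simp
    finally show ?thesis by (simp add: inner_commute)
  qed
  let ?W2 = "{y\<in>chsp X ?m. bd X ?m y = 0}"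
  let ?W1 = "{y\<in>chsp X n. adj (chsp X (n + 1)) (chsp X n) (bd X (n + 1)) y = 0}"
  have main: "((\<forall>s\<in>chsp X n. proj ?W1 (?F n (?G n s) - s) = 0) \<and> (\<forall>s\<in>chsp X ?m. proj ?W2 (A2 s - s) = 0))
     \<longleftrightarrow> nn_free X Ms n"
  proof
    assume conds: "(\<forall>s\<in>chsp X n. proj ?W1 (?F n (?G n s) - s) = 0) \<and> (\<forall>s\<in>chsp X ?m. proj ?W2 (A2 s - s) = 0)"
    show "nn_free X Ms n"
    proof (rule ccontr)
      assume "\<not> nn_free X Ms n"
      then obtain z where z: "z \<in> chsp X ?m" and zc: "bd X ?m z = 0" and zn: "z \<notin> ?F ?m ` chsp ?C ?m"
        using SC by blast
      let ?w = "z - ?F ?m (?G ?m z)"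
      have w: "?w \<in> chsp X ?m" using chsp_diff z FGin[OF z] by blast
      have "proj ?W2 (A2 ?w - ?w) = 0" using conds w by blast
      moreover have zW: "z \<in> ?W2" using z zc by simp
      ultimately have "inner (A2 ?w - ?w) z = 0" using proj_zero_orth[OF ker_fdim] by blast
      then have "inner ?w (?F ?m (?G ?m z)) - inner ?w z = 0" using K[OF z] by (simp add: inner_diff_left)
      then have "inner ?w ?w = 0" by (simp add: inner_diff_right)
      then have "z = ?F ?m (?G ?m z)" by simp
      moreover have "?G ?m z \<in> chsp ?C ?m" using Glin lin_on_in z by blast
      ultimately show False using zn by blast
    qed
  next
    assume nf: "nn_free X Ms n"
    show "(\<forall>s\<in>chsp X n. proj ?W1 (?F n (?G n s) - s) = 0) \<and> (\<forall>s\<in>chsp X ?m. proj ?W2 (A2 s - s) = 0)"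
    proof (intro conjI ballI)
      fix s assume s: "s \<in> chsp X n"
      obtain g where g: "g \<in> chsp X (n + 1)" and eg: "?F n (?G n s) - s = bd X (n + 1) g"
        using SB nf s by blast
      have adjc: "\<And>y. adj (chsp X (n + 1)) (chsp X n) (bd X (n + 1)) y \<in> chsp X (n + 1) \<and>
          (\<forall>x\<in>chsp X (n + 1). inner (bd X (n + 1) x) y = inner x (adj (chsp X (n + 1)) (chsp X n) (bd X (n + 1)) y))"
      proof -
        have bl: "lin_on (chsp X (n + 1)) (chsp X n) (bd X (n + 1))" using bd_lin[of "n + 1"] by simp
        fix y show "?thesis y" by (rule adj_char[OF chsp_fdim bl])
      qed
      have z0: "adj (chsp X (n + 1)) (chsp X n) (bd X (n + 1)) 0 = 0"
      proof -
        let ?a = "adj (chsp X (n + 1)) (chsp X n) (bd X (n + 1)) 0"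
        have "?a \<in> chsp X (n + 1)" "\<forall>x\<in>chsp X (n + 1). inner (bd X (n + 1) x) 0 = inner x ?a" using adjc by blast+
        then have "inner ?a ?a = 0" by simp
        then show ?thesis by simp
      qed
      show "proj ?W1 (?F n (?G n s) - s) = 0"
      proof (rule proj_eq)
        show "0 \<in> ?W1" using chsp_0 z0 by simp
        show "\<forall>u\<in>?W1. inner (?F n (?G n s) - s - 0) u = 0"
        proof
          fix u assume u: "u \<in> ?W1"
          have "inner (bd X (n + 1) g) u = inner g (adj (chsp X (n + 1)) (chsp X n) (bd X (n + 1)) u)"
            using adjc g by blast
          then show "inner (?F n (?G n s) - s - 0) u = 0" using eg u by simp
        qed
      qed
    next
      fix s assume s: "s \<in> chsp X ?m"
      show "proj ?W2 (A2 s - s) = 0"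
      proof (rule proj_eq)
        show "0 \<in> ?W2" using chsp_0 bd_zero by simp
        show "\<forall>u\<in>?W2. inner (A2 s - s - 0) u = 0"
        proof
          fix u assume u: "u \<in> ?W2"
          have "?F ?m (?G ?m u) = u" using SA nf u by blast
          then show "inner (A2 s - s - 0) u = 0" using K[of u s] u by (simp add: inner_diff_left)
        qed
      qed
    qed
  qed
  then show ?thesis unfolding A2_def by simp
qed



end
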